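(* Let $\mathbb{A}=S^1\times\mathbb{R}$ and let $T:\mathbb{A}\to\mathbb{A}$ be an exact symplectic map which is a twist map with respect to two sets of symplectic coordinates $(q,p)$ and $(x,y)$ on $\mathbb{A}$, with $C^2$ generating functions $H(q,q')$ and $G(x,x')$ respectively, satisfying $H_{12}>0$ and $G_{12}>0$. Assume the geometric assumption: for every $z\in\mathcal{M}_H$ the vector $\frac{\partial}{\partial y}(z)$ lies in the cone $N_H(z)$, and for every $z\in\mathcal{M}_G$ the vector $\frac{\partial}{\partial p}(z)$ lies in the cone $N_G(z)$. Then $\mathcal{M}_H=\mathcal{M}_G$.
   Context: Subscripts $1,2$ denote partial derivatives in the first/second variable. "Symplectic coordinates" means both coordinate systems induce the same symplectic form ($dq\wedge dp=dx\wedge dy$). Generating function convention (on lifts): $T(q,p)=(q',p')$ iff $p=-H_1(q,q')$, $p'=H_2(q,q')$; similarly $T(x,y)=(x',y')$ iff $y=-G_1(x,x')$, $y'=G_2(x,x')$. For $H$: a configuration is a sequence $\{q_n\}_{n\in\mathbb Z}$ with $H_2(q_{n-1},q_n)+H_1(q_n,q_{n+1})=0$ for all $n$ (equivalently, the $q$-coordinates of an orbit $\{(q_n,p_n)\}$ of $T$). It is an m-configuration if for any integers $M<N$ the segment $(q_{M+1},\dots,q_{N-1})$ is a local maximum of $\sum_{n=M}^{N-1}H(x_n,x_{n+1})$ with fixed end points $x_M=q_M$, $x_N=q_N$; the corresponding orbit is an m-orbit, and $\mathcal{M}_H\subseteq\mathbb{A}$ denotes the set swept by all m-orbits for $H$.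 Analogously $\mathcal{M}_G$ is defined using $G$ and the coordinates $(x,y)$. Cones: for a point $z=(q_0,p_0)$ with orbit $\{(q_n,p_n)\}$ satisfying $H_{22}(q_{-1},q_0)<-H_{11}(q_0,q_1)$ (this holds at every point of $\mathcal{M}_H$), write tangent vectors in $T_z\mathbb{A}$ as $(\delta q,\delta p)$; the two lines through the origin with slopes $-H_{11}(q_0,q_1)$ and $H_{22}(q_{-1},q_0)$ divide $T_z\mathbb{A}$ into four cones, denoted $N_H,W_H,S_H,E_H$ in clockwise order, where $N_H$ is the one containing the vertical vector $\frac{\partial}{\partial p}$; explicitly $N_H=\{(\delta q,\delta p):\delta p>\max(-H_{11}(q_0,q_1)\delta q,\ H_{22}(q_{-1},q_0)\delta q)\}$. The cone $N_G$ is defined analogously using $G$, the coordinates $(x,y)$ and the vertical vector $\frac{\partial}{\partial y}$. *)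

theory Defs
  imports "HOL-Analysis.Analysis"
begin

text \<open>Points of the universal cover of the annulus are pairs of reals; the first
  coordinate is the (lifted) angle. Generating functions are functions of two reals.\<close>

definition pd1 :: "(real \<Rightarrow> real \<Rightarrow> real) \<Rightarrow> real \<Rightarrow> real \<Rightarrow> real" where
  "pd1 f a b = deriv (\<lambda>s. f s b) a"

definition pd2 :: "(real \<Rightarrow> real \<Rightarrow> real) \<Rightarrow> real \<Rightarrow> real \<Rightarrow> real" where
  "pd2 f a b = deriv (\<lambda>t. f a t) b"

definition C1_fun2 :: "(real \<Rightarrow> real \<Rightarrow> real) \<Rightarrow> bool" where
  "C1_fun2 f \<longleftrightarrow>
     (\<forall>a b. ((\<lambda>z. f (fst z) (snd z)) has_derivative
               (\<lambda>h. pd1 f a b * fst h + pd2 f a b * snd h)) (at (a, b))) \<and>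
     continuous_on UNIV (\<lambda>z. pd1 f (fst z) (snd z)) \<and>
     continuous_on UNIV (\<lambda>z. pd2 f (fst z) (snd z))"

definition C2_fun2 :: "(real \<Rightarrow> real \<Rightarrow> real) \<Rightarrow> bool" where
  "C2_fun2 f \<longleftrightarrow> C1_fun2 f \<and> C1_fun2 (pd1 f) \<and> C1_fun2 (pd2 f)"

definition orbit :: "('a \<Rightarrow> 'a) \<Rightarrow> (int \<Rightarrow> 'a) \<Rightarrow> bool" where
  "orbit T z \<longleftrightarrow> (\<forall>n. z (n + 1) = T (z n))"

definition config :: "(real \<Rightarrow> real \<Rightarrow> real) \<Rightarrow> (int \<Rightarrow> real) \<Rightarrow> bool" where
  "config H q \<longleftrightarrow> (\<forall>n. pd2 H (q (n - 1)) (q n) + pd1 H (q n) (q (n + 1)) = 0)"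

definition m_config :: "(real \<Rightarrow> real \<Rightarrow> real) \<Rightarrow> (int \<Rightarrow> real) \<Rightarrow> bool" where
  "m_config H q \<longleftrightarrow> config H q \<and>
     (\<forall>M N. M < N \<longrightarrow>
        (\<exists>\<epsilon>>0. \<forall>x :: int \<Rightarrow> real.
            (\<forall>n. n \<notin> {M<..<N} \<longrightarrow> x n = q n) \<and>
            (\<forall>n\<in>{M<..<N}. \<bar>x n - q n\<bar> < \<epsilon>) \<longrightarrow>
            (\<Sum>n\<in>{M..<N}. H (x n) (x (n + 1))) \<le> (\<Sum>n\<in>{M..<N}. H (q n) (q (n + 1)))))"

text \<open>The set swept by all m-orbits: points of orbits of T (on the common point space)
  whose angle coordinate, read through the coordinate function c, is an m-configuration
  of the generating function H.\<close>
definition msweep :: "('p \<Rightarrow> 'p) \<Rightarrow> ('p \<Rightarrow> real) \<Rightarrow> (real \<Rightarrow> real \<Rightarrow> real) \<Rightarrow> 'p set" where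
  "msweep T c H = {z n | z n. orbit T z \<and> m_config H (\<lambda>k. c (z k))}"

definition N_cone :: "(real \<Rightarrow> real \<Rightarrow> real) \<Rightarrow> real \<Rightarrow> real \<Rightarrow> real \<Rightarrow> (real \<times> real) set" where
  "N_cone H qm q0 q1 =
     {(dq, dp). dp > max (- pd1 (pd1 H) q0 q1 * dq) (pd2 (pd2 H) qm q0 * dq)}"

end

theory Submission
  imports Defs
begin

lemma C1_chain:
  assumes K: "C1_fun2 K"
    and X: "(X has_real_derivative X') (at t within S)"
    and Y: "(Y has_real_derivative Y') (at t within S)"
  shows "((\<lambda>t. K (X t) (Y t)) has_real_derivative
           (pd1 K (X t) (Y t) * X' + pd2 K (X t) (Y t) * Y')) (at t within S)"
proof -
  have D: "((\<lambda>z. K (fst z) (snd z)) has_derivative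
        (\<lambda>h. pd1 K (X t) (Y t) * fst h + pd2 K (X t) (Y t) * snd h)) (at (X t, Y t))"
    using K unfolding C1_fun2_def by blast
  have P: "((\<lambda>t. (X t, Y t)) has_derivative (\<lambda>h. (X' * h, Y' * h))) (at t within S)"
    using X Y by (auto intro!: has_derivative_Pair simp: has_field_derivative_def)
  have "((\<lambda>t. K (fst (X t, Y t)) (snd (X t, Y t))) has_derivative
        (\<lambda>h. pd1 K (X t) (Y t) * fst (X' * h, Y' * h) + pd2 K (X t) (Y t) * snd (X' * h, Y' * h))) (at t within S)"
    using has_derivative_compose[OF P D] by simp
  then have "((\<lambda>t. K (X t) (Y t)) has_derivative
        (\<lambda>h. pd1 K (X t) (Y t) * (X' * h) + pd2 K (X t) (Y t) * (Y' * h))) (at t within S)" by simp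
  then show ?thesis
    unfolding has_field_derivative_def
    by (rule has_derivative_eq_rhs) (auto simp: algebra_simps)
qed

lemma C1_D1: "C1_fun2 K \<Longrightarrow> ((\<lambda>x. K x c) has_real_derivative pd1 K x c) (at x within S)"
  using C1_chain[of K "\<lambda>x. x" 1 x S "\<lambda>_. c" 0] by simp

lemma C1_D2: "C1_fun2 K \<Longrightarrow> ((\<lambda>y. K c y) has_real_derivative pd2 K c y) (at y within S)"
  using C1_chain[of K "\<lambda>_. c" 0 y S "\<lambda>y. y" 1] by simp

lemma C1_cont_eps:
  fixes F :: "real \<Rightarrow> real \<Rightarrow> real"
  assumes "continuous_on UNIV (\<lambda>z. F (fst z) (snd z))" "e > 0"
  shows "\<exists>d>0. \<forall>x y. \<bar>x - a\<bar> < d \<longrightarrow> \<bar>y - b\<bar> < d \<longrightarrow> \<bar>F x y - F a b\<bar> < (e::real)"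
proof -
  from assms obtain d where d: "d > 0" "\<And>z. dist z (a,b) < d \<Longrightarrow> dist (F (fst z) (snd z)) (F a b) < e"
    unfolding continuous_on_iff by (metis UNIV_I fst_conv snd_conv)
  show ?thesis
  proof (intro exI[of _ "d/2"] conjI allI impI)
    fix x y assume xy: "\<bar>x - a\<bar> < d/2" "\<bar>y - b\<bar> < d/2"
    have "dist (x,y) (a,b) \<le> dist x a + dist y b"
      unfolding dist_Pair_Pair by (rule sqrt_sum_squares_le_sum_abs[THEN order_trans]) auto
    also have "\<dots> < d" using xy by (simp add: dist_real_def)
    finally show "\<bar>F x y - F a b\<bar> < e" using d(2)[of "(x,y)"] by (simp add: dist_real_def)
  qed (use d in auto)
qed

lemma clairaut:
  assumes K: "C2_fun2 K"
  shows "pd1 (pd2 K) a b = pd2 (pd1 K) a b"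
proof (rule ccontr)
  assume ne: "pd1 (pd2 K) a b \<noteq> pd2 (pd1 K) a b"
  define e where "e = \<bar>pd1 (pd2 K) a b - pd2 (pd1 K) a b\<bar> / 2"
  have e: "e > 0" using ne by (simp add: e_def)
  have K1: "C1_fun2 K" and K1a: "C1_fun2 (pd1 K)" and K1b: "C1_fun2 (pd2 K)"
    using K by (auto simp: C2_fun2_def)
  obtain d1 where d1: "d1 > 0" "\<And>x y. \<bar>x - a\<bar> < d1 \<Longrightarrow> \<bar>y - b\<bar> < d1 \<Longrightarrow>
      \<bar>pd2 (pd1 K) x y - pd2 (pd1 K) a b\<bar> < e"
    using C1_cont_eps[OF _ e, of "pd2 (pd1 K)" a b] K1a unfolding C1_fun2_def by blast
  obtain d2 where d2: "d2 > 0" "\<And>x y. \<bar>x - a\<bar> < d2 \<Longrightarrow> \<bar>y - b\<bar> < d2 \<Longrightarrow>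
      \<bar>pd1 (pd2 K) x y - pd1 (pd2 K) a b\<bar> < e"
    using C1_cont_eps[OF _ e, of "pd1 (pd2 K)" a b] K1b unfolding C1_fun2_def by blast
  define h where "h = min d1 d2 / 2"
  have h: "h > 0" "h < d1" "h < d2" using d1 d2 by (auto simp: h_def)
  define F where "F = K (a+h) (b+h) - K (a+h) b - K a (b+h) + K a b"
  have "\<exists>z. a < z \<and> z < a + h \<and> (K (a+h) (b+h) - K (a+h) b) - (K a (b+h) - K a b) = (a + h - a) * (pd1 K z (b+h) - pd1 K z b)"
    by (rule MVT2[of a "a+h" "\<lambda>x. K x (b+h) - K x b"]) (use h in \<open>auto intro!: derivative_eq_intros C1_D1[OF K1]\<close>)
  then obtain \<xi> where \<xi>: "a < \<xi>" "\<xi> < a + h"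
    "(K (a+h) (b+h) - K (a+h) b) - (K a (b+h) - K a b) = h * (pd1 K \<xi> (b+h) - pd1 K \<xi> b)" by auto
  have "\<exists>z. b < z \<and> z < b + h \<and> pd1 K \<xi> (b+h) - pd1 K \<xi> b = (b + h - b) * pd2 (pd1 K) \<xi> z"
    by (rule MVT2[of b "b+h" "\<lambda>y. pd1 K \<xi> y"]) (use h in \<open>auto intro!: C1_D2[OF K1a]\<close>)
  then obtain \<eta> where \<eta>: "b < \<eta>" "\<eta> < b + h"
    "pd1 K \<xi> (b+h) - pd1 K \<xi> b = h * pd2 (pd1 K) \<xi> \<eta>" by auto
  have "\<exists>z. b < z \<and> z < b + h \<and> (K (a+h) (b+h) - K a (b+h)) - (K (a+h) b - K a b) = (b + h - b) * (pd2 K (a+h) z - pd2 K a z)"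
    by (rule MVT2[of b "b+h" "\<lambda>y. K (a+h) y - K a y"]) (use h in \<open>auto intro!: derivative_eq_intros C1_D2[OF K1]\<close>)
  then obtain \<eta>' where \<eta>': "b < \<eta>'" "\<eta>' < b + h"
    "(K (a+h) (b+h) - K a (b+h)) - (K (a+h) b - K a b) = h * (pd2 K (a+h) \<eta>' - pd2 K a \<eta>')" by auto
  have "\<exists>z. a < z \<and> z < a + h \<and> pd2 K (a+h) \<eta>' - pd2 K a \<eta>' = (a + h - a) * pd1 (pd2 K) z \<eta>'"
    by (rule MVT2[of a "a+h" "\<lambda>x. pd2 K x \<eta>'"]) (use h in \<open>auto intro!: C1_D1[OF K1b]\<close>)
  then obtain \<xi>' where \<xi>': "a < \<xi>'" "\<xi>' < a + h"
    "pd2 K (a+h) \<eta>' - pd2 K a \<eta>' = h * pd1 (pd2 K) \<xi>' \<eta>'" by auto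
  have "h * (h * pd2 (pd1 K) \<xi> \<eta>) = h * (h * pd1 (pd2 K) \<xi>' \<eta>')"
    using \<xi>(3) \<eta>(3) \<eta>'(3) \<xi>'(3) by (simp add: algebra_simps)
  then have eq: "pd2 (pd1 K) \<xi> \<eta> = pd1 (pd2 K) \<xi>' \<eta>'" using h by simp
  have "\<bar>pd2 (pd1 K) \<xi> \<eta> - pd2 (pd1 K) a b\<bar> < e" using d1(2) \<xi> \<eta> h by auto
  moreover have "\<bar>pd1 (pd2 K) \<xi>' \<eta>' - pd1 (pd2 K) a b\<bar> < e" using d2(2) \<xi>' \<eta>' h by auto
  ultimately have "\<bar>pd1 (pd2 K) a b - pd2 (pd1 K) a b\<bar> < 2 * e" using eq abs_triangle_ineq4 by (smt (verit))
  then show False using e_def by simp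
qed

definition A1 :: "(real \<Rightarrow> real \<Rightarrow> real) \<Rightarrow> (int \<Rightarrow> real) \<Rightarrow> int \<Rightarrow> real" where
  "A1 K s n = pd1 (pd1 K) (s n) (s (n+1))"
definition BB :: "(real \<Rightarrow> real \<Rightarrow> real) \<Rightarrow> (int \<Rightarrow> real) \<Rightarrow> int \<Rightarrow> real" where
  "BB K s n = pd2 (pd1 K) (s n) (s (n+1))"
definition A2 :: "(real \<Rightarrow> real \<Rightarrow> real) \<Rightarrow> (int \<Rightarrow> real) \<Rightarrow> int \<Rightarrow> real" where
  "A2 K s n = pd2 (pd2 K) (s n) (s (n+1))"

definition jac :: "(real \<Rightarrow> real \<Rightarrow> real) \<Rightarrow> (int \<Rightarrow> real) \<Rightarrow> int \<Rightarrow> (int \<Rightarrow> real) \<Rightarrow> bool" where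
  "jac K s j u \<longleftrightarrow> (\<forall>k>j. BB K s (k-1) * u (k-1) + (A2 K s (k-1) + A1 K s k) * u k + BB K s k * u (k+1) = 0)"

definition posprop :: "(real \<Rightarrow> real \<Rightarrow> real) \<Rightarrow> (int \<Rightarrow> real) \<Rightarrow> bool" where
  "posprop K s \<longleftrightarrow> (\<forall>j u. jac K s j u \<longrightarrow> u j = 0 \<longrightarrow> u (j+1) > 0 \<longrightarrow> (\<forall>n>j. u n > 0))"

lemma jac_exists:
  assumes nz: "\<And>n. BB K s n \<noteq> 0"
  shows "\<exists>u. jac K s j u \<and> u j = \<alpha> \<and> u (j+1) = \<beta>"
proof -
  define r where "r = rec_nat (\<alpha>, \<beta>) (\<lambda>m p. (snd p, - (BB K s (j + int m) * fst p
        + (A2 K s (j + int m) + A1 K s (j + int m + 1)) * snd p) / BB K s (j + int m + 1)))"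
  have r0: "r 0 = (\<alpha>, \<beta>)" by (simp add: r_def)
  have rS: "r (Suc m) = (snd (r m), - (BB K s (j + int m) * fst (r m)
        + (A2 K s (j + int m) + A1 K s (j + int m + 1)) * snd (r m)) / BB K s (j + int m + 1))" for m
    by (simp add: r_def)
  define u where "u k = fst (r (nat (k - j)))" for k
  have "jac K s j u" unfolding jac_def
  proof (intro allI impI)
    fix k assume "k > j"
    then obtain m where m: "k = j + int m + 1" by (metis add.commute add_diff_cancel_left' zless_iff_Suc_zadd add.assoc of_nat_Suc)
    have e1: "u (k-1) = fst (r m)" by (simp add: u_def m)
    have e2: "u k = snd (r m)" by (simp add: u_def m nat_add_distrib rS)
    have e3: "u (k+1) = - (BB K s (j + int m) * fst (r m)
        + (A2 K s (j + int m) + A1 K s (j + int m + 1)) * snd (r m)) / BB K s (j + int m + 1)"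
    proof -
      have "nat (k + 1 - j) = Suc (Suc m)" using m by simp
      then show ?thesis by (simp add: u_def rS)
    qed
    show "BB K s (k-1) * u (k-1) + (A2 K s (k-1) + A1 K s k) * u k + BB K s k * u (k+1) = 0"
      using nz[of k] unfolding e1 e2 e3 by (simp add: m field_simps)
  qed
  moreover have "u j = \<alpha>" "u (j+1) = \<beta>" by (simp_all add: u_def r0 rS)
  ultimately show ?thesis by blast
qed

lemma jac_unique:
  assumes nz: "\<And>n. BB K s n \<noteq> 0" and u: "jac K s j u" and v: "jac K s j v"
    and e0: "u j = v j" and e1: "u (j+1) = v (j+1)" and n: "n \<ge> j"
  shows "u n = v n"
proof -
  have "u (j + int m) = v (j + int m) \<and> u (j + int m + 1) = v (j + int m + 1)" for m
  proof (induction m)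
    case 0 then show ?case using e0 e1 by simp
  next
    case (Suc m)
    define k where "k = j + int m + 1"
    have kj: "k > j" by (simp add: k_def)
    have eu: "BB K s (k-1) * u (k-1) + (A2 K s (k-1) + A1 K s k) * u k + BB K s k * u (k+1) = 0"
      using u kj unfolding jac_def by blast
    have ev: "BB K s (k-1) * v (k-1) + (A2 K s (k-1) + A1 K s k) * v k + BB K s k * v (k+1) = 0"
      using v kj unfolding jac_def by blast
    have ek: "u (k-1) = v (k-1)" "u k = v k" using Suc by (simp_all add: k_def)
    then have "BB K s (k-1) * v (k-1) + (A2 K s (k-1) + A1 K s k) * v k + BB K s k * u (k+1) = 0"
      using eu by simp
    then have "BB K s k * u (k+1) = BB K s k * v (k+1)" using ev by linarith
    then have "u (k+1) = v (k+1)" using nz[of k] by simp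
    moreover have e: "j + int (Suc m) = k" "j + int (Suc m) + 1 = k + 1" by (simp_all add: k_def)
    ultimately show ?case unfolding e using ek by simp
  qed
  from this[of "nat (n - j)"] n show ?thesis by simp
qed

lemma jac_mono: "jac K s j u \<Longrightarrow> j \<le> j' \<Longrightarrow> jac K s j' u"
  unfolding jac_def by auto

lemma jac_scale: assumes "jac K s j u" shows "jac K s j (\<lambda>n. c * u n)"
  unfolding jac_def
proof (intro allI impI)
  fix k assume "k > j"
  then have "BB K s (k-1) * u (k-1) + (A2 K s (k-1) + A1 K s k) * u k + BB K s k * u (k+1) = 0"
    using assms unfolding jac_def by blast
  moreover have "BB K s (k-1) * (c * u (k-1)) + (A2 K s (k-1) + A1 K s k) * (c * u k) + BB K s k * (c * u (k+1))
     = c * (BB K s (k-1) * u (k-1) + (A2 K s (k-1) + A1 K s k) * u k + BB K s k * u (k+1))"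
    by (simp add: algebra_simps)
  ultimately show "BB K s (k-1) * (c * u (k-1)) + (A2 K s (k-1) + A1 K s k) * (c * u k) + BB K s k * (c * u (k+1)) = 0"
    by simp
qed

lemma wronskian:
  assumes u: "jac K s j u" and v: "jac K s j v" and n: "n \<ge> j"
  shows "BB K s n * (u n * v (n+1) - u (n+1) * v n) = BB K s j * (u j * v (j+1) - u (j+1) * v j)"
  using n
proof (induction n rule: int_ge_induct)
  case base then show ?case by simp
next
  case (step i)
  have ju0: "BB K s (i+1-1) * u (i+1-1) + (A2 K s (i+1-1) + A1 K s (i+1)) * u (i+1) + BB K s (i+1) * u (i+1+1) = 0"
    using u[unfolded jac_def, rule_format, of "i+1"] step(1) by simp
  have jv0: "BB K s (i+1-1) * v (i+1-1) + (A2 K s (i+1-1) + A1 K s (i+1)) * v (i+1) + BB K s (i+1) * v (i+1+1) = 0"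
    using v[unfolded jac_def, rule_format, of "i+1"] step(1) by simp
  have ju: "BB K s (i+1) * u (i+2) = - (BB K s i * u i + (A2 K s i + A1 K s (i+1)) * u (i+1))"
    using ju0 by (simp add: add.assoc)
  have jv: "BB K s (i+1) * v (i+2) = - (BB K s i * v i + (A2 K s i + A1 K s (i+1)) * v (i+1))"
    using jv0 by (simp add: add.assoc)
  have "BB K s (i+1) * (u (i+1) * v (i+1+1) - u (i+1+1) * v (i+1))
      = u (i+1) * (BB K s (i+1) * v (i+2)) - v (i+1) * (BB K s (i+1) * u (i+2))"
    by (simp add: algebra_simps)
  also have "\<dots> = BB K s i * (u i * v (i+1) - u (i+1) * v i)"
    unfolding ju jv by (simp add: algebra_simps)
  finally show ?case using step by simp
qed

lemma sep_aux:
  assumes pos: "\<And>n. BB K s n > 0" and f: "jac K s m f" and u: "jac K s m u"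
    and fpos: "\<And>n. n > m \<Longrightarrow> f n > 0"
    and W: "BB K s m * (f m * u (m+1) - f (m+1) * u m) \<ge> 0" and u1: "u (m+1) > 0"
    and n: "n \<ge> m + 1"
  shows "u n > 0"
  using n
proof (induction n rule: int_ge_induct)
  case base then show ?case using u1 .
next
  case (step i)
  have "BB K s i * (f i * u (i+1) - f (i+1) * u i) = BB K s m * (f m * u (m+1) - f (m+1) * u m)"
    by (rule wronskian[OF f u]) (use step in simp)
  with W have "BB K s i * (f i * u (i+1) - f (i+1) * u i) \<ge> 0" by simp
  with pos[of i] have "f i * u (i+1) - f (i+1) * u i \<ge> 0" by (simp add: zero_le_mult_iff)
  moreover have "f (i+1) * u i > 0" using fpos[of "i+1"] step by simp
  ultimately have "f i * u (i+1) > 0" by linarith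
  moreover have "f i > 0" using fpos[of i] step by simp
  ultimately show ?case by (simp add: zero_less_mult_iff)
qed

lemma sep:
  assumes pos: "\<And>n. BB K s n > 0" and P: "posprop K s" and u: "jac K s (j-1) u"
    and um: "u (j-1) < 0" and up: "u (j+1) > 0" and n: "n \<ge> j + 1"
  shows "u n > 0"
proof (cases "u j \<le> 0")
  case True
  have nz: "\<And>n. BB K s n \<noteq> 0" using pos by (metis less_irrefl)
  obtain f where f: "jac K s j f" "f j = 0" "f (j+1) = 1" using jac_exists[OF nz] by blast
  have fpos: "\<And>n. n > j \<Longrightarrow> f n > 0" using P f unfolding posprop_def by auto
  have uj: "jac K s j u" using jac_mono[OF u] by simp
  have "BB K s j * (f j * u (j+1) - f (j+1) * u j) \<ge> 0"
    using True pos[of j] f by (simp add: mult_le_0_iff)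
  from sep_aux[OF pos f(1) uj fpos this up n] show ?thesis .
next
  case False
  have nz: "\<And>n. BB K s n \<noteq> 0" using pos by (metis less_irrefl)
  obtain g where g: "jac K s (j-1) g" "g (j-1) = 0" "g (j-1+1) = 1" using jac_exists[OF nz] by blast
  have gpos: "\<And>n. n > j-1 \<Longrightarrow> g n > 0" using P g unfolding posprop_def by auto
  have "BB K s (j-1) * (g (j-1) * u (j-1+1) - g (j-1+1) * u (j-1)) \<ge> 0"
    using um pos[of "j-1"] g by (simp add: mult_le_0_iff)
  moreover have "u (j-1+1) > 0" using False by simp
  moreover have "n \<ge> j - 1 + 1 + 1" using n by simp
  ultimately have "\<forall>n' \<ge> j-1+1. u n' > 0" using sep_aux[OF pos g(1) u gpos] by blast
  then show ?thesis using n by simp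
qed

lemma key_alg:
  fixes um u0 up pu J0 P a1 a2 b0 bm :: real
  assumes "um > 0" "u0 > 0" "up > 0" "b0 > 0" "bm > 0" "P > - a1 * J0" "P > a2 * J0"
    "pu = - a1 * u0 - b0 * up" "pu = bm * um + a2 * u0"
  shows "u0 * P - pu * J0 > 0"
proof (cases "J0 \<ge> 0")
  case True
  have "u0 * P - pu * J0 = u0 * (P + a1 * J0) + b0 * up * J0" by (subst assms(8)) (simp add: algebra_simps)
  moreover have "u0 * (P + a1 * J0) > 0" using assms by simp
  moreover have "b0 * up * J0 \<ge> 0" using assms True by simp
  ultimately show ?thesis by linarith
next
  case False
  have "u0 * P - pu * J0 = u0 * (P - a2 * J0) + bm * um * (- J0)" by (subst assms(9)) (simp add: algebra_simps)
  moreover have "u0 * (P - a2 * J0) > 0" using assms by simp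
  moreover have "bm * um * (- J0) > 0" using assms(1,5) False by (intro mult_pos_pos) auto
  ultimately show ?thesis by linarith
qed

lemma sum_shift_int: "(\<Sum>n\<in>{M..<N}. g (n+1)) = (\<Sum>k\<in>{M+1..<N+1::int}. g k)"
  by (rule sum.reindex_bij_witness[of _ "\<lambda>k. k-1" "\<lambda>n. n+1"]) auto

lemma sum_split_low: "M < N \<Longrightarrow> (\<Sum>n\<in>{M..<N::int}. g n) = g M + (\<Sum>n\<in>{M+1..<N}. g n)"
proof -
  assume "M < N"
  then have "{M..<N} = insert M {M+1..<N}" by auto
  then show ?thesis by simp
qed

lemma sum_split_high: "M < N \<Longrightarrow> (\<Sum>n\<in>{M+1..<N+1::int}. g n) = g N + (\<Sum>n\<in>{M+1..<N}. g n)"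
proof -
  assume "M < N"
  then have "{M+1..<N+1} = insert N {M+1..<N}" by auto
  then show ?thesis by simp
qed

lemma sum_regroup:
  assumes "M < N"
  shows "(\<Sum>n\<in>{M..<N::int}. F n + G (n+1)) = F M + G N + (\<Sum>k\<in>{M+1..<N}. F k + G k)"
proof -
  have "(\<Sum>n\<in>{M..<N::int}. F n + G (n+1)) = (\<Sum>n\<in>{M..<N}. F n) + (\<Sum>n\<in>{M..<N}. G (n+1))"
    by (simp add: sum.distrib)
  also have "\<dots> = F M + (\<Sum>n\<in>{M+1..<N}. F n) + (G N + (\<Sum>n\<in>{M+1..<N}. G n))"
    by (simp only: sum_split_low[OF assms] sum_shift_int sum_split_high[OF assms])
  also have "\<dots> = F M + G N + (\<Sum>k\<in>{M+1..<N}. F k + G k)" by (simp add: sum.distrib algebra_simps)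
  finally show ?thesis .
qed

section \<open>Second variation\<close>

definition Qf :: "(real \<Rightarrow> real \<Rightarrow> real) \<Rightarrow> (int \<Rightarrow> real) \<Rightarrow> (int \<Rightarrow> real) \<Rightarrow> int \<Rightarrow> int \<Rightarrow> real" where
  "Qf K y w M N = (\<Sum>n\<in>{M..<N}. A1 K y n * (w n)^2 + 2 * BB K y n * w n * w (n+1) + A2 K y n * (w (n+1))^2)"

definition Lop :: "(real \<Rightarrow> real \<Rightarrow> real) \<Rightarrow> (int \<Rightarrow> real) \<Rightarrow> (int \<Rightarrow> real) \<Rightarrow> int \<Rightarrow> real" where
  "Lop K y w k = BB K y (k-1) * w (k-1) + (A2 K y (k-1) + A1 K y k) * w k + BB K y k * w (k+1)"

lemma jac_Lop: "jac K s j u \<longleftrightarrow> (\<forall>k>j. Lop K s u k = 0)"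
  unfolding jac_def Lop_def by simp

lemma Q_regroup:
  assumes "M < N" "w M = 0" "w N = 0"
  shows "Qf K y w M N = (\<Sum>k\<in>{M+1..<N}. w k * Lop K y w k)"
proof -
  have "Qf K y w M N = (\<Sum>n\<in>{M..<N}. (A1 K y n * (w n)^2 + BB K y n * w n * w (n+1))
      + (BB K y (n+1-1) * w (n+1-1) * w (n+1) + A2 K y (n+1-1) * (w (n+1))^2))"
    unfolding Qf_def by (rule sum.cong) (simp_all add: algebra_simps)
  also have "\<dots> = (\<Sum>k\<in>{M+1..<N}. (A1 K y k * (w k)^2 + BB K y k * w k * w (k+1))
      + (BB K y (k-1) * w (k-1) * w k + A2 K y (k-1) * (w k)^2))"
    using sum_regroup[OF assms(1), of "\<lambda>n. A1 K y n * (w n)^2 + BB K y n * w n * w (n+1)"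
        "\<lambda>k. BB K y (k-1) * w (k-1) * w k + A2 K y (k-1) * (w k)^2"] assms(2,3)
    by (simp add: power2_eq_square)
  also have "\<dots> = (\<Sum>k\<in>{M+1..<N}. w k * Lop K y w k)"
    unfolding Lop_def by (rule sum.cong) (simp_all add: algebra_simps power2_eq_square)
  finally show ?thesis .
qed

lemma line_deriv:
  assumes "C1_fun2 F"
  shows "((\<lambda>t. F (a + t * c) (b + t * d)) has_real_derivative
     (pd1 F (a + t * c) (b + t * d) * c + pd2 F (a + t * c) (b + t * d) * d)) (at t within X)"
  by (rule C1_chain[OF assms]) (auto intro!: derivative_eq_intros)

lemma phi_d1:
  assumes "C1_fun2 K"
  shows "((\<lambda>t. \<Sum>n\<in>S. K (s n + t * w n) (s (n+1) + t * w (n+1))) has_real_derivative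
     (\<Sum>n\<in>S. pd1 K (s n + t * w n) (s (n+1) + t * w (n+1)) * w n
             + pd2 K (s n + t * w n) (s (n+1) + t * w (n+1)) * w (n+1))) (at t within X)"
  by (intro DERIV_sum C1_chain[OF assms]) (auto intro!: derivative_eq_intros)

lemma phi_d2:
  assumes K: "C2_fun2 K"
  shows "((\<lambda>t. \<Sum>n\<in>{M..<N}. pd1 K (s n + t * w n) (s (n+1) + t * w (n+1)) * w n
             + pd2 K (s n + t * w n) (s (n+1) + t * w (n+1)) * w (n+1)) has_real_derivative
     Qf K (\<lambda>n. s n + t * w n) w M N) (at t within X)"
proof -
  have K1a: "C1_fun2 (pd1 K)" and K1b: "C1_fun2 (pd2 K)" using K by (auto simp: C2_fun2_def)
  have "((\<lambda>t. \<Sum>n\<in>{M..<N}. pd1 K (s n + t * w n) (s (n+1) + t * w (n+1)) * w n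
             + pd2 K (s n + t * w n) (s (n+1) + t * w (n+1)) * w (n+1)) has_real_derivative
     (\<Sum>n\<in>{M..<N}. (pd1 (pd1 K) (s n + t * w n) (s (n+1) + t * w (n+1)) * w n
         + pd2 (pd1 K) (s n + t * w n) (s (n+1) + t * w (n+1)) * w (n+1)) * w n
       + (pd1 (pd2 K) (s n + t * w n) (s (n+1) + t * w (n+1)) * w n
         + pd2 (pd2 K) (s n + t * w n) (s (n+1) + t * w (n+1)) * w (n+1)) * w (n+1))) (at t within X)"
    by (intro DERIV_sum DERIV_add DERIV_cmult_right line_deriv K1a K1b)
  moreover have "(\<Sum>n\<in>{M..<N}. (pd1 (pd1 K) (s n + t * w n) (s (n+1) + t * w (n+1)) * w n
         + pd2 (pd1 K) (s n + t * w n) (s (n+1) + t * w (n+1)) * w (n+1)) * w n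
       + (pd1 (pd2 K) (s n + t * w n) (s (n+1) + t * w (n+1)) * w n
         + pd2 (pd2 K) (s n + t * w n) (s (n+1) + t * w (n+1)) * w (n+1)) * w (n+1))
      = Qf K (\<lambda>n. s n + t * w n) w M N"
    unfolding Qf_def A1_def BB_def A2_def clairaut[OF K]
    by (rule sum.cong) (simp_all add: algebra_simps power2_eq_square)
  ultimately show ?thesis by simp
qed

lemma phi1_zero:
  assumes cfg: "config K s" and MN: "M < N" and wM: "w M = 0" and wN: "w N = 0"
  shows "(\<Sum>n\<in>{M..<N}. pd1 K (s n + 0 * w n) (s (n+1) + 0 * w (n+1)) * w n
             + pd2 K (s n + 0 * w n) (s (n+1) + 0 * w (n+1)) * w (n+1)) = 0"
proof -
  have "(\<Sum>n\<in>{M..<N}. pd1 K (s n + 0 * w n) (s (n+1) + 0 * w (n+1)) * w n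
             + pd2 K (s n + 0 * w n) (s (n+1) + 0 * w (n+1)) * w (n+1))
      = (\<Sum>n\<in>{M..<N}. pd1 K (s n) (s (n+1)) * w n + pd2 K (s (n+1-1)) (s (n+1)) * w (n+1))"
    by simp
  also have "\<dots> = (\<Sum>k\<in>{M+1..<N}. pd1 K (s k) (s (k+1)) * w k + pd2 K (s (k-1)) (s k) * w k)"
    using sum_regroup[OF MN, of "\<lambda>n. pd1 K (s n) (s (n+1)) * w n" "\<lambda>k. pd2 K (s (k-1)) (s k) * w k"] wM wN
    by simp
  also have "\<dots> = 0"
    using cfg unfolding config_def by (intro sum.neutral) (metis add.commute distrib_right mult_zero_left)
  finally show ?thesis .
qed

lemma not_max:
  assumes K: "C2_fun2 K" and cfg: "config K s" and MN: "M < N"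
    and wout: "\<And>n. n \<notin> {M<..<N} \<Longrightarrow> w n = 0" and Q: "Qf K s w M N > 0" and e: "\<epsilon> > 0"
  shows "\<exists>x. (\<forall>n. n \<notin> {M<..<N} \<longrightarrow> x n = s n) \<and> (\<forall>n\<in>{M<..<N}. \<bar>x n - s n\<bar> < \<epsilon>) \<and>
     (\<Sum>n\<in>{M..<N}. K (x n) (x (n+1))) > (\<Sum>n\<in>{M..<N}. K (s n) (s (n+1)))"
proof -
  have K1: "C1_fun2 K" using K by (simp add: C2_fun2_def)
  define \<phi> where "\<phi> t = (\<Sum>n\<in>{M..<N}. K (s n + t * w n) (s (n+1) + t * w (n+1)))" for t
  define \<phi>1 where "\<phi>1 t = (\<Sum>n\<in>{M..<N}. pd1 K (s n + t * w n) (s (n+1) + t * w (n+1)) * w n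
             + pd2 K (s n + t * w n) (s (n+1) + t * w (n+1)) * w (n+1))" for t
  have d1: "(\<phi> has_real_derivative \<phi>1 t) (at t)" for t
    unfolding \<phi>_def \<phi>1_def by (rule phi_d1[OF K1])
  have d2: "(\<phi>1 has_real_derivative Qf K s w M N) (at 0)"
    using phi_d2[OF K, where M=M and N=N and s=s and w=w and t=0 and X=UNIV] unfolding \<phi>1_def by simp
  have wM: "w M = 0" and wN: "w N = 0" using wout by auto
  have z: "\<phi>1 0 = 0" unfolding \<phi>1_def by (rule phi1_zero[OF cfg MN wM wN])
  obtain d where d: "d > 0" "\<And>h. h > 0 \<Longrightarrow> h < d \<Longrightarrow> \<phi>1 0 < \<phi>1 (0 + h)"
    using DERIV_pos_inc_right[OF d2 Q] by blast
  define S where "S = (\<Sum>n\<in>{M<..<N}. \<bar>w n\<bar>)"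
  have S0: "S \<ge> 0" unfolding S_def by (rule sum_nonneg) simp
  define t where "t = min (d/2) (\<epsilon> / (S+1))"
  have t: "t > 0" "t < d" using d e S0 by (auto simp: t_def)
  have "\<exists>z. 0 < z \<and> z < t \<and> \<phi> t - \<phi> 0 = (t - 0) * \<phi>1 z"
    by (rule MVT2) (use t d1 in auto)
  then obtain z where z1: "0 < z" "z < t" "\<phi> t - \<phi> 0 = t * \<phi>1 z" by auto
  have "\<phi>1 z > 0" using d(2)[of z] z1 t z by simp
  then have gt: "\<phi> t > \<phi> 0" using z1 t by (simp add: algebra_simps)
  define x where "x n = s n + t * w n" for n
  have "\<forall>n. n \<notin> {M<..<N} \<longrightarrow> x n = s n" using wout by (simp add: x_def)
  moreover have "\<forall>n\<in>{M<..<N}. \<bar>x n - s n\<bar> < \<epsilon>"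
  proof
    fix n assume n: "n \<in> {M<..<N}"
    have "\<bar>w n\<bar> \<le> S" unfolding S_def by (rule member_le_sum) (use n in auto)
    then have "t * \<bar>w n\<bar> \<le> t * S" using t by (simp add: mult_left_mono)
    also have "\<dots> \<le> \<epsilon> / (S+1) * S" using S0 unfolding t_def by (intro mult_right_mono) auto
    also have "\<dots> < \<epsilon>" using S0 e by (simp add: field_simps)
    finally show "\<bar>x n - s n\<bar> < \<epsilon>" using t by (simp add: x_def abs_mult)
  qed
  moreover have "(\<Sum>n\<in>{M..<N}. K (x n) (x (n+1))) = \<phi> t" by (simp add: x_def \<phi>_def)
  moreover have "(\<Sum>n\<in>{M..<N}. K (s n) (s (n+1))) = \<phi> 0" by (simp add: \<phi>_def)
  ultimately show ?thesis using gt by metis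
qed

lemma m_config_posprop:
  assumes K: "C2_fun2 K" and tw: "\<And>a b. pd2 (pd1 K) a b > 0" and mc: "m_config K s"
  shows "posprop K s"
  unfolding posprop_def
proof (intro allI impI)
  fix j f n0 assume f: "jac K s j f" and f0: "f j = 0" and f1: "f (j+1) > 0" and nj: "n0 > j"
  have pos: "\<And>n. BB K s n > 0" using tw by (simp add: BB_def)
  have cfg: "config K s" using mc by (simp add: m_config_def)
  show "f n0 > 0"
  proof (rule ccontr)
    assume "\<not> f n0 > 0"
    then have n0: "n0 > j" "f n0 \<le> 0" using nj by auto
    then have "\<exists>m::nat. f (j + 1 + int m) \<le> 0" by (intro exI[of _ "nat (n0 - j - 1)"]) simp
    then obtain m where m: "f (j + 1 + int m) \<le> 0" "\<And>k. k < m \<Longrightarrow> \<not> f (j + 1 + int k) \<le> 0"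
      using exists_least_iff[of "\<lambda>m. f (j + 1 + int m) \<le> 0"] by blast
    define N where "N = j + 1 + int m"
    have m0: "m > 0" using m(1) f1 by (cases m) auto
    have N2: "N \<ge> j + 2" using m0 by (simp add: N_def)
    have fN: "f N \<le> 0" using m(1) by (simp add: N_def)
    have fpos: "f k > 0" if "j < k" "k < N" for k
    proof -
      have "nat (k - j - 1) < m" using that by (simp add: N_def)
      from m(2)[OF this] show ?thesis using that by simp
    qed
    define c where "c = BB K s (N-1) * f (N-1)"
    have c: "c > 0" unfolding c_def using pos fpos[of "N-1"] N2 by simp
    define D where "D = A2 K s (N-1) + A1 K s N"
    define \<sigma> where "\<sigma> = c / (\<bar>D\<bar> + 1)"
    have \<sigma>: "\<sigma> > 0" using c by (simp add: \<sigma>_def)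
    define w where "w k = (if j < k \<and> k < N then f k else if k = N then \<sigma> else 0)" for k
    have wf: "w k = f k" if "j \<le> k" "k < N" for k
      using that f0 by (cases "k = j") (auto simp: w_def)
    have Lf: "Lop K s f k = 0" if "k > j" for k using f that by (simp add: jac_Lop)
    have Q1: "Qf K s w j (N+1) = (\<Sum>k\<in>{j+1..<N+1}. w k * Lop K s w k)"
      by (rule Q_regroup) (use N2 in \<open>auto simp: w_def\<close>)
    also have "\<dots> = w N * Lop K s w N + (w (N-1) * Lop K s w (N-1) + (\<Sum>k\<in>{j+1..<N-1}. w k * Lop K s w k))"
    proof -
      have "(\<Sum>k\<in>{j+1..<N+1}. w k * Lop K s w k) = w N * Lop K s w N + (\<Sum>k\<in>{j+1..<N}. w k * Lop K s w k)"
        by (rule sum_split_high) (use N2 in simp)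
      moreover have "(\<Sum>k\<in>{j+1..<N-1+1}. w k * Lop K s w k) = w (N-1) * Lop K s w (N-1) + (\<Sum>k\<in>{j+1..<N-1}. w k * Lop K s w k)"
        by (rule sum_split_high) (use N2 in simp)
      ultimately show ?thesis by simp
    qed
    also have "(\<Sum>k\<in>{j+1..<N-1}. w k * Lop K s w k) = 0"
    proof (rule sum.neutral, intro ballI)
      fix k assume k: "k \<in> {j+1..<N-1}"
      have "Lop K s w k = Lop K s f k" unfolding Lop_def using k by (simp add: wf)
      then show "w k * Lop K s w k = 0" using Lf[of k] k by simp
    qed
    also have "Lop K s w (N-1) = BB K s (N-1) * (\<sigma> - f N)"
    proof -
      have "Lop K s f (N-1) = 0" using Lf[of "N-1"] N2 by simp
      moreover have "w (N-1-1) = f (N-1-1)" "w (N-1) = f (N-1)" by (rule wf, use N2 in auto)+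
      moreover have "w (N-1+1) = \<sigma>" by (simp add: w_def)
      ultimately show ?thesis unfolding Lop_def by (simp add: algebra_simps)
    qed
    also have "Lop K s w N = c + D * \<sigma>"
    proof -
      have "w (N-1) = f (N-1)" "w N = \<sigma>" "w (N+1) = 0" using N2 by (auto simp: wf w_def)
      then show ?thesis unfolding Lop_def c_def D_def by simp
    qed
    finally have Qv0: "Qf K s w j (N+1) = w N * (c + D * \<sigma>) + (w (N-1) * (BB K s (N-1) * (\<sigma> - f N)) + 0)" .
    have "w N = \<sigma>" by (simp add: w_def)
    moreover have "w (N-1) = f (N-1)" by (rule wf) (use N2 in auto)
    ultimately have Qv: "Qf K s w j (N+1) = \<sigma> * (c + D * \<sigma>) + f (N-1) * (BB K s (N-1) * (\<sigma> - f N))"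
      using Qv0 by simp
    have Qpos: "Qf K s w j (N+1) > 0"
    proof -
      have eq1: "f (N-1) * (BB K s (N-1) * (\<sigma> - f N)) = c * \<sigma> - c * f N" by (simp add: c_def algebra_simps)
      have h1: "c * f N \<le> 0" using c fN by (simp add: mult_nonneg_nonpos)
      have h2: "\<bar>D\<bar> * \<sigma> < c"
      proof -
        have "\<bar>D\<bar> * \<sigma> = c * (\<bar>D\<bar> / (\<bar>D\<bar> + 1))" by (simp add: \<sigma>_def field_simps)
        also have "\<dots> < c * 1" using c by (intro mult_strict_left_mono) auto
        finally show ?thesis by simp
      qed
      have h3: "D * \<sigma> \<ge> - (\<bar>D\<bar> * \<sigma>)" using \<sigma> abs_ge_minus_self[of "D*\<sigma>"] by (simp add: abs_mult)
      have h4: "c * \<sigma> > 0" using c \<sigma> by simp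
      have h5: "c + D * \<sigma> > 0" using h2 h3 by linarith
      have h6: "c * \<sigma> - c * f N > 0" using h1 h4 by linarith
      have h7: "\<sigma> * (c + D * \<sigma>) > 0" by (rule mult_pos_pos[OF \<sigma> h5])
      show ?thesis unfolding Qv eq1 using h6 h7 by linarith
    qed
    have jN: "j < N + 1" using N2 by simp
    obtain \<epsilon> where e: "\<epsilon> > 0" and emax: "\<forall>x :: int \<Rightarrow> real.
            (\<forall>n. n \<notin> {j<..<N+1} \<longrightarrow> x n = s n) \<and>
            (\<forall>n\<in>{j<..<N+1}. \<bar>x n - s n\<bar> < \<epsilon>) \<longrightarrow>
            (\<Sum>n\<in>{j..<N+1}. K (x n) (x (n + 1))) \<le> (\<Sum>n\<in>{j..<N+1}. K (s n) (s (n + 1)))"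
      using mc jN unfolding m_config_def by blast
    have wout: "\<And>n. n \<notin> {j<..<N+1} \<Longrightarrow> w n = 0" using N2 by (auto simp: w_def)
    obtain x where x1: "\<forall>n. n \<notin> {j<..<N+1} \<longrightarrow> x n = s n" and x2: "\<forall>n\<in>{j<..<N+1}. \<bar>x n - s n\<bar> < \<epsilon>"
      and x3: "(\<Sum>n\<in>{j..<N+1}. K (x n) (x (n+1))) > (\<Sum>n\<in>{j..<N+1}. K (s n) (s (n+1)))"
      using not_max[OF K cfg jN wout Qpos e] by blast
    have "(\<Sum>n\<in>{j..<N+1}. K (x n) (x (n+1))) \<le> (\<Sum>n\<in>{j..<N+1}. K (s n) (s (n+1)))"
      using emax x1 x2 by blast
    then show False using x3 by linarith
  qed
qed

section \<open>Sufficiency\<close>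

lemma telescope_int: fixes h :: "int \<Rightarrow> real" shows "M \<le> k \<Longrightarrow> h k - h M = (\<Sum>n\<in>{M..<k::int}. h (n+1) - h n)"
proof (induction k rule: int_ge_induct)
  case base then show ?case by simp
next
  case (step i)
  then have "{M..<i+1} = insert i {M..<i}" by auto
  then show ?case using step by simp
qed

lemma poincare:
  fixes h :: "int \<Rightarrow> real"
  assumes hM: "h M = 0" and MN: "M \<le> N"
  shows "(\<Sum>k\<in>{M+1..<N}. (h k)^2) \<le> (real_of_int (N - M))^2 * (\<Sum>n\<in>{M..<N}. (h (n+1) - h n)^2)"
proof -
  define S where "S = (\<Sum>n\<in>{M..<N}. (h (n+1) - h n)^2)"
  have S0: "S \<ge> 0" unfolding S_def by (rule sum_nonneg) simp
  have each: "(h k)^2 \<le> real_of_int (N - M) * S" if k: "k \<in> {M+1..<N}" for k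
  proof -
    have "h k = (\<Sum>n\<in>{M..<k}. h (n+1) - h n)" using telescope_int[of M k h] hM k by simp
    then have "(h k)^2 \<le> (\<Sum>n\<in>{M..<k}. (h (n+1) - h n)^2) * card {M..<k}"
      using sum_squared_le_sum_of_squares[of "\<lambda>n. h (n+1) - h n" "{M..<k}"] by simp
    also have "\<dots> \<le> S * real_of_int (N - M)"
    proof (rule mult_mono)
      show "(\<Sum>n\<in>{M..<k}. (h (n+1) - h n)^2) \<le> S"
        unfolding S_def by (rule sum_mono2) (use k in auto)
      show "real (card {M..<k}) \<le> real_of_int (N - M)" using k by simp
    qed (use S0 in auto)
    finally show ?thesis by (simp add: mult.commute)
  qed
  have "(\<Sum>k\<in>{M+1..<N}. (h k)^2) \<le> (\<Sum>k\<in>{M+1..<N}. real_of_int (N - M) * S)"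
    by (rule sum_mono) (rule each)
  also have "\<dots> = real (card {M+1..<N}) * (real_of_int (N - M) * S)" by simp
  also have "\<dots> \<le> real_of_int (N - M) * (real_of_int (N - M) * S)"
    by (rule mult_right_mono) (use MN S0 in auto)
  finally show ?thesis by (simp add: S_def power2_eq_square mult.assoc)
qed

lemma picone_term:
  fixes gn gm wn wm A B C :: real
  assumes "gn \<noteq> 0" "gm \<noteq> 0"
  shows "A * wn^2 + 2 * B * wn * wm + C * wm^2
    = (wn/gn)^2 * gn * (A * gn + B * gm) + (wm/gm)^2 * gm * (B * gn + C * gm) - B * gn * gm * (wm/gm - wn/gn)^2"
proof -
  define a where "a = wn / gn"
  define b where "b = wm / gm"
  have "wn = gn * a" "wm = gm * b" using assms by (simp_all add: a_def b_def)
  then show ?thesis unfolding a_def[symmetric] b_def[symmetric] by (simp add: algebra_simps power2_eq_square)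
qed

lemma picone:
  assumes MN: "M < N" and gnz: "\<And>k. M \<le> k \<Longrightarrow> k \<le> N \<Longrightarrow> g k \<noteq> 0" and wM: "w M = 0" and wN: "w N = 0"
  shows "Qf K y w M N = (\<Sum>k\<in>{M+1..<N}. (w k / g k)^2 * g k * Lop K y g k)
     - (\<Sum>n\<in>{M..<N}. BB K y n * g n * g (n+1) * (w (n+1) / g (n+1) - w n / g n)^2)"
proof -
  define F where "F n = (w n / g n)^2 * g n * (A1 K y n * g n + BB K y n * g (n+1))" for n
  define G where "G k = (w k / g k)^2 * g k * (BB K y (k-1) * g (k-1) + A2 K y (k-1) * g k)" for k
  have "Qf K y w M N = (\<Sum>n\<in>{M..<N}. (F n + G (n+1)) - BB K y n * g n * g (n+1) * (w (n+1) / g (n+1) - w n / g n)^2)"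
    unfolding Qf_def
  proof (rule sum.cong)
    fix n assume n: "n \<in> {M..<N}"
    have "g n \<noteq> 0" "g (n+1) \<noteq> 0" using gnz n by auto
    then show "A1 K y n * (w n)^2 + 2 * BB K y n * w n * w (n+1) + A2 K y n * (w (n+1))^2
       = (F n + G (n+1)) - BB K y n * g n * g (n+1) * (w (n+1) / g (n+1) - w n / g n)^2"
      unfolding F_def G_def using picone_term[where gn="g n" and gm="g (n+1)" and wn="w n" and wm="w (n+1)"
        and A="A1 K y n" and B="BB K y n" and C="A2 K y n"] by simp
  qed simp
  also have "\<dots> = (\<Sum>n\<in>{M..<N}. F n + G (n+1)) - (\<Sum>n\<in>{M..<N}. BB K y n * g n * g (n+1) * (w (n+1) / g (n+1) - w n / g n)^2)"
    by (simp add: sum_subtractf)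
  also have "(\<Sum>n\<in>{M..<N}. F n + G (n+1)) = F M + G N + (\<Sum>k\<in>{M+1..<N}. F k + G k)"
    by (rule sum_regroup[OF MN])
  also have "\<dots> = (\<Sum>k\<in>{M+1..<N}. (w k / g k)^2 * g k * Lop K y g k)"
    using wM wN unfolding F_def G_def Lop_def by (simp add: algebra_simps)
  finally show ?thesis .
qed

lemma Q_nonpos:
  fixes \<eta> \<beta> :: real
  assumes MN: "M < N" and gpos: "\<And>k. M \<le> k \<Longrightarrow> k \<le> N \<Longrightarrow> g k > 0"
    and wM: "w M = 0" and wN: "w N = 0"
    and lsmall: "\<And>k. M < k \<Longrightarrow> k < N \<Longrightarrow> g k * Lop K y g k \<le> \<eta>"
    and bbig: "\<And>n. M \<le> n \<Longrightarrow> n < N \<Longrightarrow> BB K y n * g n * g (n+1) \<ge> \<beta>"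
    and eta: "\<eta> \<ge> 0" and eb: "\<eta> * (real_of_int (N - M))^2 \<le> \<beta>"
  shows "Qf K y w M N \<le> 0"
proof -
  define h where "h k = w k / g k" for k
  have gnz: "\<And>k. M \<le> k \<Longrightarrow> k \<le> N \<Longrightarrow> g k \<noteq> 0" using gpos by (metis less_irrefl)
  define S where "S = (\<Sum>n\<in>{M..<N}. (h (n+1) - h n)^2)"
  have S0: "S \<ge> 0" unfolding S_def by (rule sum_nonneg) simp
  have hM: "h M = 0" using wM by (simp add: h_def)
  have Q: "Qf K y w M N = (\<Sum>k\<in>{M+1..<N}. (h k)^2 * (g k * Lop K y g k))
     - (\<Sum>n\<in>{M..<N}. BB K y n * g n * g (n+1) * (h (n+1) - h n)^2)"
    using picone[OF MN gnz wM wN, where K=K and y=y] unfolding h_def by (simp add: mult.assoc)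
  have t1: "(\<Sum>k\<in>{M+1..<N}. (h k)^2 * (g k * Lop K y g k)) \<le> (\<Sum>k\<in>{M+1..<N}. (h k)^2 * \<eta>)"
    by (rule sum_mono) (auto intro!: mult_left_mono lsmall)
  also have "\<dots> = \<eta> * (\<Sum>k\<in>{M+1..<N}. (h k)^2)" by (simp add: sum_distrib_left mult.commute)
  also have "\<dots> \<le> \<eta> * ((real_of_int (N - M))^2 * S)"
    unfolding S_def by (rule mult_left_mono[OF poincare[where h=h and M=M and N=N, OF hM]]) (use MN eta in auto)
  also have "\<dots> \<le> \<beta> * S" using eb S0 by (simp add: mult.assoc[symmetric] mult_right_mono)
  finally have T1: "(\<Sum>k\<in>{M+1..<N}. (h k)^2 * (g k * Lop K y g k)) \<le> \<beta> * S" .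
  have "\<beta> * S = (\<Sum>n\<in>{M..<N}. \<beta> * (h (n+1) - h n)^2)" by (simp add: S_def sum_distrib_left)
  also have "\<dots> \<le> (\<Sum>n\<in>{M..<N}. BB K y n * g n * g (n+1) * (h (n+1) - h n)^2)"
    by (rule sum_mono) (auto intro!: mult_right_mono bbig)
  finally show ?thesis unfolding Q using T1 by linarith
qed

lemma finite_cont:
  fixes F :: "real \<Rightarrow> real \<Rightarrow> real" and s :: "int \<Rightarrow> real"
  assumes cont: "continuous_on UNIV (\<lambda>z. F (fst z) (snd z))" and fin: "finite S" and th: "\<theta> > 0"
  shows "\<exists>\<epsilon>>0. \<forall>n\<in>S. \<forall>a b. \<bar>a - s n\<bar> < \<epsilon> \<longrightarrow> \<bar>b - s (n+1)\<bar> < \<epsilon> \<longrightarrow>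
           \<bar>F a b - F (s n) (s (n+1))\<bar> < \<theta>"
  using fin
proof induct
  case empty then show ?case by (intro exI[of _ 1]) simp
next
  case (insert n S)
  then obtain e1 where e1: "e1 > 0" "\<forall>n\<in>S. \<forall>a b. \<bar>a - s n\<bar> < e1 \<longrightarrow> \<bar>b - s (n+1)\<bar> < e1 \<longrightarrow>
           \<bar>F a b - F (s n) (s (n+1))\<bar> < \<theta>" by blast
  obtain d where d: "d > 0" "\<forall>a b. \<bar>a - s n\<bar> < d \<longrightarrow> \<bar>b - s (n+1)\<bar> < d \<longrightarrow> \<bar>F a b - F (s n) (s (n+1))\<bar> < \<theta>"
    using C1_cont_eps[OF cont th, of "s n" "s (n+1)"] by blast
  show ?case
    by (rule exI[of _ "min e1 d"]) (use e1 d in auto)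
qed

lemma abs_prod_bound:
  fixes a b th G :: real
  assumes "\<bar>a\<bar> \<le> th" "0 \<le> b" "b \<le> G"
  shows "\<bar>a * b\<bar> \<le> th * G"
proof -
  have "\<bar>a * b\<bar> = \<bar>a\<bar> * b" using assms by (simp add: abs_mult)
  also have "\<dots> \<le> th * G" using assms by (intro mult_mono) auto
  finally show ?thesis .
qed

lemma posprop_m_config:
  assumes K: "C2_fun2 K" and tw: "\<And>a b. pd2 (pd1 K) a b > 0" and cfg: "config K s" and P: "posprop K s"
  shows "m_config K s"
  unfolding m_config_def
proof (intro conjI cfg allI impI)
  fix M N :: int assume MN: "M < N"
  have K1: "C1_fun2 K" and K1a: "C1_fun2 (pd1 K)" and K1b: "C1_fun2 (pd2 K)" using K by (auto simp: C2_fun2_def)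
  have pos: "\<And>n. BB K s n > 0" using tw by (simp add: BB_def)
  have nz: "\<And>n. BB K s n \<noteq> 0" using pos by (metis less_irrefl)
  obtain g where g: "jac K s (M-1) g" "g (M-1) = 0" "g (M-1+1) = 1" using jac_exists[OF nz] by blast
  have gpos: "g k > 0" if "k \<ge> M" for k using P g that unfolding posprop_def by auto
  have gL: "Lop K s g k = 0" if "k \<ge> M" for k using g(1) that by (simp add: jac_Lop)
  define Gs where "Gs = (\<Sum>k\<in>{M..N}. g k)"
  have gle: "g k \<le> Gs" if "M \<le> k" "k \<le> N" for k
    unfolding Gs_def by (rule member_le_sum) (use that in \<open>auto intro: less_imp_le gpos\<close>)
  have Gs0: "Gs > 0" using gle[of M] gpos[of M] MN by simp
  define V where "V = (\<lambda>n. BB K s n * g n * g (n+1)) ` {M..<N}"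
  have Vfin: "finite V" "V \<noteq> {}" using MN by (auto simp: V_def)
  define \<beta> where "\<beta> = Min V / 2"
  have \<beta>: "\<beta> > 0"
  proof -
    obtain n where "n \<in> {M..<N}" "Min V = BB K s n * g n * g (n+1)"
      using Min_in[OF Vfin] unfolding V_def by auto
    then show ?thesis using pos[of n] gpos[of n] gpos[of "n+1"] by (simp add: \<beta>_def)
  qed
  have bs: "BB K s n * g n * g (n+1) \<ge> 2 * \<beta>" if "n \<in> {M..<N}" for n
    using Min_le[OF Vfin(1), of "BB K s n * g n * g (n+1)"] that by (simp add: V_def \<beta>_def)
  define \<eta> where "\<eta> = \<beta> / (real_of_int (N - M))^2"
  have \<eta>: "\<eta> > 0" "\<eta> * (real_of_int (N - M))^2 \<le> \<beta>" using \<beta> MN by (simp_all add: \<eta>_def)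
  define \<theta> where "\<theta> = min (\<eta> / (4 * Gs^2 + 1)) (\<beta> / (Gs^2 + 1))"
  have pA: "4 * Gs^2 + 1 > 0" and pB: "Gs^2 + 1 > 0" by (auto intro: add_nonneg_pos)
  then have \<theta>: "\<theta> > 0" using \<eta> \<beta> unfolding \<theta>_def by (simp add: divide_pos_pos)
  have \<theta>1: "4 * \<theta> * Gs^2 \<le> \<eta>"
  proof -
    have "\<theta> \<le> \<eta> / (4 * Gs^2 + 1)" by (simp add: \<theta>_def)
    then have "\<theta> * (4 * Gs^2 + 1) \<le> \<eta>" by (simp add: pos_le_divide_eq[OF pA])
    then show ?thesis using \<theta> by (simp add: algebra_simps)
  qed
  have \<theta>2: "\<theta> * Gs^2 \<le> \<beta>"
  proof -
    have "\<theta> \<le> \<beta> / (Gs^2 + 1)" by (simp add: \<theta>_def)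
    then have "\<theta> * (Gs^2 + 1) \<le> \<beta>" by (simp add: pos_le_divide_eq[OF pB])
    then show ?thesis using \<theta> by (simp add: algebra_simps)
  qed
  obtain e1 where e1: "e1 > 0" "\<forall>n\<in>{M..<N}. \<forall>a b. \<bar>a - s n\<bar> < e1 \<longrightarrow> \<bar>b - s (n+1)\<bar> < e1 \<longrightarrow>
      \<bar>pd1 (pd1 K) a b - pd1 (pd1 K) (s n) (s (n+1))\<bar> < \<theta>"
    using finite_cont[of "pd1 (pd1 K)" "{M..<N}" \<theta> s] K1a \<theta> unfolding C1_fun2_def by auto
  obtain e2 where e2: "e2 > 0" "\<forall>n\<in>{M..<N}. \<forall>a b. \<bar>a - s n\<bar> < e2 \<longrightarrow> \<bar>b - s (n+1)\<bar> < e2 \<longrightarrow>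
      \<bar>pd2 (pd1 K) a b - pd2 (pd1 K) (s n) (s (n+1))\<bar> < \<theta>"
    using finite_cont[of "pd2 (pd1 K)" "{M..<N}" \<theta> s] K1a \<theta> unfolding C1_fun2_def by auto
  obtain e3 where e3: "e3 > 0" "\<forall>n\<in>{M..<N}. \<forall>a b. \<bar>a - s n\<bar> < e3 \<longrightarrow> \<bar>b - s (n+1)\<bar> < e3 \<longrightarrow>
      \<bar>pd2 (pd2 K) a b - pd2 (pd2 K) (s n) (s (n+1))\<bar> < \<theta>"
    using finite_cont[of "pd2 (pd2 K)" "{M..<N}" \<theta> s] K1b \<theta> unfolding C1_fun2_def by auto
  define \<epsilon> where "\<epsilon> = min e1 (min e2 e3)"
  have \<epsilon>: "\<epsilon> > 0" using e1 e2 e3 by (simp add: \<epsilon>_def)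
  show "\<exists>\<epsilon>>0. \<forall>x :: int \<Rightarrow> real.
            (\<forall>n. n \<notin> {M<..<N} \<longrightarrow> x n = s n) \<and>
            (\<forall>n\<in>{M<..<N}. \<bar>x n - s n\<bar> < \<epsilon>) \<longrightarrow>
            (\<Sum>n\<in>{M..<N}. K (x n) (x (n + 1))) \<le> (\<Sum>n\<in>{M..<N}. K (s n) (s (n + 1)))"
  proof (intro exI[of _ \<epsilon>] conjI allI impI \<epsilon>)
    fix x :: "int \<Rightarrow> real"
    assume x: "(\<forall>n. n \<notin> {M<..<N} \<longrightarrow> x n = s n) \<and> (\<forall>n\<in>{M<..<N}. \<bar>x n - s n\<bar> < \<epsilon>)"
    define w where "w n = x n - s n" for n
    have wM: "w M = 0" and wN: "w N = 0" using x by (auto simp: w_def)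
    have wsmall: "\<bar>w n\<bar> < \<epsilon>" for n
      using x \<epsilon> by (cases "n \<in> {M<..<N}") (auto simp: w_def)
    define \<phi> where "\<phi> t = (\<Sum>n\<in>{M..<N}. K (s n + t * w n) (s (n+1) + t * w (n+1)))" for t
    define \<phi>1 where "\<phi>1 t = (\<Sum>n\<in>{M..<N}. pd1 K (s n + t * w n) (s (n+1) + t * w (n+1)) * w n
             + pd2 K (s n + t * w n) (s (n+1) + t * w (n+1)) * w (n+1))" for t
    have d1: "(\<phi> has_real_derivative \<phi>1 t) (at t)" for t
      unfolding \<phi>_def \<phi>1_def by (rule phi_d1[OF K1])
    have d2: "(\<phi>1 has_real_derivative Qf K (\<lambda>n. s n + t * w n) w M N) (at t)" for t
      unfolding \<phi>1_def by (rule phi_d2[OF K])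
    have z: "\<phi>1 0 = 0" unfolding \<phi>1_def by (rule phi1_zero[OF cfg MN wM wN])
    have Qt: "Qf K (\<lambda>n. s n + t * w n) w M N \<le> 0" if t: "0 \<le> t" "t \<le> 1" for t
    proof -
      define y where "y n = s n + t * w n" for n
      have ys: "\<bar>y n - s n\<bar> < \<epsilon>" for n
      proof -
        have "\<bar>y n - s n\<bar> = t * \<bar>w n\<bar>" using t by (simp add: y_def abs_mult)
        also have "\<dots> \<le> \<bar>w n\<bar>" using t by (simp add: mult_left_le_one_le)
        finally show ?thesis using wsmall[of n] by linarith
      qed
      have c1: "\<bar>A1 K y n - A1 K s n\<bar> \<le> \<theta>" and c2: "\<bar>BB K y n - BB K s n\<bar> \<le> \<theta>"
        and c3: "\<bar>A2 K y n - A2 K s n\<bar> \<le> \<theta>" if n: "n \<in> {M..<N}" for n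
      proof -
        have a: "\<bar>y n - s n\<bar> < e1" "\<bar>y (n+1) - s (n+1)\<bar> < e1"
             "\<bar>y n - s n\<bar> < e2" "\<bar>y (n+1) - s (n+1)\<bar> < e2"
             "\<bar>y n - s n\<bar> < e3" "\<bar>y (n+1) - s (n+1)\<bar> < e3"
          using ys[of n] ys[of "n+1"] by (auto simp: \<epsilon>_def)
        show "\<bar>A1 K y n - A1 K s n\<bar> \<le> \<theta>" using e1(2) n a unfolding A1_def by (meson less_imp_le)
        show "\<bar>BB K y n - BB K s n\<bar> \<le> \<theta>" using e2(2) n a unfolding BB_def by (meson less_imp_le)
        show "\<bar>A2 K y n - A2 K s n\<bar> \<le> \<theta>" using e3(2) n a unfolding A2_def by (meson less_imp_le)
      qed
      have lsmall: "g k * Lop K y g k \<le> \<eta>" if k: "M < k" "k < N" for k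
      proof -
        have "Lop K y g k = Lop K y g k - Lop K s g k" using gL[of k] k by simp
        also have "\<dots> = (BB K y (k-1) - BB K s (k-1)) * g (k-1) + (A2 K y (k-1) - A2 K s (k-1)) * g k
            + (A1 K y k - A1 K s k) * g k + (BB K y k - BB K s k) * g (k+1)"
          unfolding Lop_def by (simp add: algebra_simps)
        finally have L: "Lop K y g k = \<dots>" .
        have b1: "\<bar>(BB K y (k-1) - BB K s (k-1)) * g (k-1)\<bar> \<le> \<theta> * Gs"
          by (rule abs_prod_bound) (use k c2[of "k-1"] gle[of "k-1"] gpos[of "k-1"] in auto)
        have b2: "\<bar>(A2 K y (k-1) - A2 K s (k-1)) * g k\<bar> \<le> \<theta> * Gs"
          by (rule abs_prod_bound) (use k c3[of "k-1"] gle[of k] gpos[of k] in auto)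
        have b3: "\<bar>(A1 K y k - A1 K s k) * g k\<bar> \<le> \<theta> * Gs"
          by (rule abs_prod_bound) (use k c1[of k] gle[of k] gpos[of k] in auto)
        have b4: "\<bar>(BB K y k - BB K s k) * g (k+1)\<bar> \<le> \<theta> * Gs"
          by (rule abs_prod_bound) (use k c2[of k] gle[of "k+1"] gpos[of "k+1"] in auto)
        have "\<bar>Lop K y g k\<bar> \<le> 4 * (\<theta> * Gs)" unfolding L using b1 b2 b3 b4 by linarith
        then have "\<bar>Lop K y g k * g k\<bar> \<le> (4 * (\<theta> * Gs)) * Gs"
          by (intro abs_prod_bound) (use k gle[of k] gpos[of k] in auto)
        then have "Lop K y g k * g k \<le> (4 * (\<theta> * Gs)) * Gs" using abs_ge_self[of "Lop K y g k * g k"] by linarith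
        moreover have "(4 * (\<theta> * Gs)) * Gs = 4 * \<theta> * Gs^2" by (simp add: power2_eq_square)
        ultimately have "g k * Lop K y g k \<le> 4 * \<theta> * Gs^2" by (metis mult.commute)
        then show ?thesis using \<theta>1 by linarith
      qed
      have bbig: "BB K y n * g n * g (n+1) \<ge> \<beta>" if n: "M \<le> n" "n < N" for n
      proof -
        have "\<bar>(BB K y n - BB K s n) * (g n * g (n+1))\<bar> \<le> \<theta> * (Gs * Gs)"
        proof (rule abs_prod_bound)
          show "g n * g (n+1) \<le> Gs * Gs"
            using gle[of n] gle[of "n+1"] gpos[of n] gpos[of "n+1"] n by (intro mult_mono) auto
        qed (use c2[of n] n gpos[of n] gpos[of "n+1"] in auto)
        moreover have "BB K y n * g n * g (n+1) = BB K s n * g n * g (n+1) + (BB K y n - BB K s n) * (g n * g (n+1))"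
          by (simp add: algebra_simps)
        moreover have "BB K s n * g n * g (n+1) \<ge> 2 * \<beta>" using bs n by simp
        ultimately show ?thesis using \<theta>2 by (simp add: power2_eq_square)
      qed
      show ?thesis unfolding y_def[symmetric]
        by (rule Q_nonpos[OF MN _ wM wN lsmall bbig _ \<eta>(2)]) (use gpos \<eta> in auto)
    qed
    have p1: "\<phi>1 t \<le> 0" if t: "0 \<le> t" "t \<le> 1" for t
    proof -
      have "\<phi>1 0 \<ge> \<phi>1 t"
        by (rule DERIV_nonpos_imp_nonincreasing[OF t(1)]) (use d2 Qt t in force)
      then show ?thesis using z by simp
    qed
    have "\<phi> 0 \<ge> \<phi> 1"
      by (rule DERIV_nonpos_imp_nonincreasing) (use d1 p1 in force)+
    moreover have "(\<Sum>n\<in>{M..<N}. K (x n) (x (n + 1))) = \<phi> 1" by (simp add: \<phi>_def w_def)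
    moreover have "(\<Sum>n\<in>{M..<N}. K (s n) (s (n + 1))) = \<phi> 0" by (simp add: \<phi>_def)
    ultimately show "(\<Sum>n\<in>{M..<N}. K (x n) (x (n + 1))) \<le> (\<Sum>n\<in>{M..<N}. K (s n) (s (n + 1)))" by simp
  qed
qed

section \<open>Transfer between the two coordinate systems\<close>

lemma pair_deriv:
  assumes "(f has_real_derivative f') (at t within X)" "(g has_real_derivative g') (at t within X)"
  shows "((\<lambda>t. (f t, g t)) has_derivative (\<lambda>h. h *\<^sub>R (f', g'))) (at t within X)"
proof -
  have "((\<lambda>t. (f t, g t)) has_derivative (\<lambda>h. (f' * h, g' * h))) (at t within X)"
    using has_derivative_Pair[OF assms(1)[unfolded has_field_derivative_def] assms(2)[unfolded has_field_derivative_def]]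
    by simp
  then show ?thesis by (rule has_derivative_eq_rhs) (auto simp: fun_eq_iff mult.commute)
qed

lemma vec_fst:
  assumes "(f has_derivative (\<lambda>h. h *\<^sub>R v)) F"
  shows "((\<lambda>t. fst (f t)) has_real_derivative fst v) F"
proof -
  have "((\<lambda>t. fst (f t)) has_derivative (\<lambda>h. fst (h *\<^sub>R v))) F" by (rule has_derivative_fst[OF assms])
  then show ?thesis unfolding has_field_derivative_def
    by (rule has_derivative_eq_rhs) (auto simp: fun_eq_iff mult.commute)
qed

lemma vec_snd:
  assumes "(f has_derivative (\<lambda>h. h *\<^sub>R v)) F"
  shows "((\<lambda>t. snd (f t)) has_real_derivative snd v) F"
proof -
  have "((\<lambda>t. snd (f t)) has_derivative (\<lambda>h. snd (h *\<^sub>R v))) F" by (rule has_derivative_snd[OF assms])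
  then show ?thesis unfolding has_field_derivative_def
    by (rule has_derivative_eq_rhs) (auto simp: fun_eq_iff mult.commute)
qed

lemma lin2:
  fixes f :: "real \<times> real \<Rightarrow> real \<times> real" and a b :: real
  assumes "linear f"
  shows "f (a, b) = (a * fst (f (1,0)) + b * fst (f (0,1)), a * snd (f (1,0)) + b * snd (f (0,1)))"
proof -
  have "f (a, b) = f (a *\<^sub>R (1::real, 0::real) + b *\<^sub>R (0, 1))" by simp
  also have "\<dots> = f (a *\<^sub>R (1::real, 0::real)) + f (b *\<^sub>R (0, 1))" by (rule linear_add[OF assms])
  also have "\<dots> = a *\<^sub>R f (1,0) + b *\<^sub>R f (0,1)" by (simp only: linear_scale[OF assms])
  finally have "f (a, b) = a *\<^sub>R f (1,0) + b *\<^sub>R f (0,1)" .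
  then show ?thesis by (simp add: prod_eq_iff)
qed

locale twoc =
  fixes T :: "real \<times> real \<Rightarrow> real \<times> real"
    and \<Phi> :: "real \<times> real \<Rightarrow> real \<times> real"
    and D\<Phi> :: "real \<times> real \<Rightarrow> real \<times> real \<Rightarrow> real \<times> real"
    and H G :: "real \<Rightarrow> real \<Rightarrow> real"
  assumes Phi_deriv: "\<And>z. (\<Phi> has_derivative D\<Phi> z) (at z)"
    and Phi_sympl: "\<And>z. fst (D\<Phi> z (1, 0)) * snd (D\<Phi> z (0, 1))
                        - fst (D\<Phi> z (0, 1)) * snd (D\<Phi> z (1, 0)) = 1"
    and H_C2: "C2_fun2 H" and G_C2: "C2_fun2 G"
    and H_twist: "\<And>q q'. pd2 (pd1 H) q q' > 0"
    and G_twist: "\<And>x x'. pd2 (pd1 G) x x' > 0"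
    and T_gen_H: "\<And>q p q' p'. T (q, p) = (q', p') \<longleftrightarrow> p = - pd1 H q q' \<and> p' = pd2 H q q'"
    and T_gen_G: "\<And>z z'. T z = z' \<longleftrightarrow>
           snd (\<Phi> z) = - pd1 G (fst (\<Phi> z)) (fst (\<Phi> z')) \<and>
           snd (\<Phi> z') = pd2 G (fst (\<Phi> z)) (fst (\<Phi> z'))"
begin

lemma transfer:
  fixes a b ua ub :: real
  defines "Z \<equiv> (a, - pd1 H a b)" and "Z' \<equiv> (b, pd2 H a b)"
    and "\<xi> \<equiv> (ua, - pd1 (pd1 H) a b * ua - pd2 (pd1 H) a b * ub)"
    and "\<xi>' \<equiv> (ub, pd1 (pd2 H) a b * ua + pd2 (pd2 H) a b * ub)"
  shows "snd (D\<Phi> Z \<xi>) = - (pd1 (pd1 G) (fst (\<Phi> Z)) (fst (\<Phi> Z')) * fst (D\<Phi> Z \<xi>)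
                              + pd2 (pd1 G) (fst (\<Phi> Z)) (fst (\<Phi> Z')) * fst (D\<Phi> Z' \<xi>'))"
    and "snd (D\<Phi> Z' \<xi>') = pd1 (pd2 G) (fst (\<Phi> Z)) (fst (\<Phi> Z')) * fst (D\<Phi> Z \<xi>)
                              + pd2 (pd2 G) (fst (\<Phi> Z)) (fst (\<Phi> Z')) * fst (D\<Phi> Z' \<xi>')"
proof -
  have H1a: "C1_fun2 (pd1 H)" and H1b: "C1_fun2 (pd2 H)" using H_C2 by (auto simp: C2_fun2_def)
  have G1a: "C1_fun2 (pd1 G)" and G1b: "C1_fun2 (pd2 G)" using G_C2 by (auto simp: C2_fun2_def)
  define Zt where "Zt t = (a + t * ua, - pd1 H (a + t * ua) (b + t * ub))" for t
  define Zt' where "Zt' t = (b + t * ub, pd2 H (a + t * ua) (b + t * ub))" for t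
  have TZ: "T (Zt t) = Zt' t" for t unfolding Zt_def Zt'_def by (simp add: T_gen_H)
  have id12: "snd (\<Phi> (Zt t)) = - pd1 G (fst (\<Phi> (Zt t))) (fst (\<Phi> (Zt' t))) \<and>
     snd (\<Phi> (Zt' t)) = pd2 G (fst (\<Phi> (Zt t))) (fst (\<Phi> (Zt' t)))" for t
    using T_gen_G[of "Zt t" "Zt' t"] TZ[of t] by simp
  have id1: "snd (\<Phi> (Zt t)) = - pd1 G (fst (\<Phi> (Zt t))) (fst (\<Phi> (Zt' t)))" for t using id12[of t] by (rule conjunct1)
  have id2: "snd (\<Phi> (Zt' t)) = pd2 G (fst (\<Phi> (Zt t))) (fst (\<Phi> (Zt' t)))" for t using id12[of t] by (rule conjunct2)
  have Z0: "Zt 0 = Z" "Zt' 0 = Z'" by (simp_all add: Zt_def Zt'_def Z_def Z'_def)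
  have dZ: "(Zt has_derivative (\<lambda>h. h *\<^sub>R \<xi>)) (at 0)"
  proof -
    have dg: "((\<lambda>t. - pd1 H (a + t * ua) (b + t * ub)) has_real_derivative
        - (pd1 (pd1 H) (a + 0 * ua) (b + 0 * ub) * ua + pd2 (pd1 H) (a + 0 * ua) (b + 0 * ub) * ub)) (at 0)"
      by (intro DERIV_minus line_deriv H1a)
    have df: "((\<lambda>t. a + t * ua) has_real_derivative ua) (at 0)" by (auto intro!: derivative_eq_intros)
    have "(Zt has_derivative (\<lambda>h. h *\<^sub>R (ua, - (pd1 (pd1 H) (a + 0 * ua) (b + 0 * ub) * ua + pd2 (pd1 H) (a + 0 * ua) (b + 0 * ub) * ub)))) (at 0)"
      unfolding Zt_def by (rule pair_deriv[OF df dg])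
    moreover have "(ua, - (pd1 (pd1 H) (a + 0 * ua) (b + 0 * ub) * ua + pd2 (pd1 H) (a + 0 * ua) (b + 0 * ub) * ub)) = \<xi>"
      by (simp add: \<xi>_def)
    ultimately show ?thesis by (simp only:)
  qed
  have dZ': "(Zt' has_derivative (\<lambda>h. h *\<^sub>R \<xi>')) (at 0)"
  proof -
    have dg: "((\<lambda>t. pd2 H (a + t * ua) (b + t * ub)) has_real_derivative
        (pd1 (pd2 H) (a + 0 * ua) (b + 0 * ub) * ua + pd2 (pd2 H) (a + 0 * ua) (b + 0 * ub) * ub)) (at 0)"
      by (intro line_deriv H1b)
    have df: "((\<lambda>t. b + t * ub) has_real_derivative ub) (at 0)" by (auto intro!: derivative_eq_intros)
    have "(Zt' has_derivative (\<lambda>h. h *\<^sub>R (ub, pd1 (pd2 H) (a + 0 * ua) (b + 0 * ub) * ua + pd2 (pd2 H) (a + 0 * ua) (b + 0 * ub) * ub))) (at 0)"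
      unfolding Zt'_def by (rule pair_deriv[OF df dg])
    moreover have "(ub, pd1 (pd2 H) (a + 0 * ua) (b + 0 * ub) * ua + pd2 (pd2 H) (a + 0 * ua) (b + 0 * ub) * ub) = \<xi>'"
      by (simp add: \<xi>'_def)
    ultimately show ?thesis by (simp only:)
  qed
  have lin: "linear (D\<Phi> z)" for z using Phi_deriv has_derivative_linear by blast
  have comp: "((\<lambda>t. \<Phi> (Y t)) has_derivative (\<lambda>h. h *\<^sub>R D\<Phi> (Y 0) v)) (at 0)"
    if dY: "(Y has_derivative (\<lambda>h. h *\<^sub>R v)) (at 0)" for Y v
  proof -
    have "((\<lambda>t. \<Phi> (Y t)) has_derivative (\<lambda>h. D\<Phi> (Y 0) (h *\<^sub>R v))) (at 0)"
      using has_derivative_compose[OF dY Phi_deriv[of "Y 0"]] by simp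
    then show ?thesis by (rule has_derivative_eq_rhs) (simp add: fun_eq_iff linear_scale[OF lin])
  qed
  have dP: "((\<lambda>t. \<Phi> (Zt t)) has_derivative (\<lambda>h. h *\<^sub>R D\<Phi> Z \<xi>)) (at 0)" using comp[OF dZ] Z0 by simp
  have dP': "((\<lambda>t. \<Phi> (Zt' t)) has_derivative (\<lambda>h. h *\<^sub>R D\<Phi> Z' \<xi>')) (at 0)" using comp[OF dZ'] Z0 by simp
  have fX: "((\<lambda>t. fst (\<Phi> (Zt t))) has_real_derivative fst (D\<Phi> Z \<xi>)) (at 0)" using vec_fst[OF dP] .
  have fX': "((\<lambda>t. fst (\<Phi> (Zt' t))) has_real_derivative fst (D\<Phi> Z' \<xi>')) (at 0)" using vec_fst[OF dP'] .
  have sY: "((\<lambda>t. snd (\<Phi> (Zt t))) has_real_derivative snd (D\<Phi> Z \<xi>)) (at 0)" using vec_snd[OF dP] .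
  have sY': "((\<lambda>t. snd (\<Phi> (Zt' t))) has_real_derivative snd (D\<Phi> Z' \<xi>')) (at 0)" using vec_snd[OF dP'] .
  have g1: "((\<lambda>t. - pd1 G (fst (\<Phi> (Zt t))) (fst (\<Phi> (Zt' t)))) has_real_derivative
      - (pd1 (pd1 G) (fst (\<Phi> Z)) (fst (\<Phi> Z')) * fst (D\<Phi> Z \<xi>)
         + pd2 (pd1 G) (fst (\<Phi> Z)) (fst (\<Phi> Z')) * fst (D\<Phi> Z' \<xi>'))) (at 0)"
    using DERIV_minus[OF C1_chain[OF G1a fX fX']] Z0 by simp
  have g2: "((\<lambda>t. pd2 G (fst (\<Phi> (Zt t))) (fst (\<Phi> (Zt' t)))) has_real_derivative
      (pd1 (pd2 G) (fst (\<Phi> Z)) (fst (\<Phi> Z')) * fst (D\<Phi> Z \<xi>)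
         + pd2 (pd2 G) (fst (\<Phi> Z)) (fst (\<Phi> Z')) * fst (D\<Phi> Z' \<xi>'))) (at 0)"
    using C1_chain[OF G1b fX fX'] Z0 by simp
  have e1: "(\<lambda>t. snd (\<Phi> (Zt t))) = (\<lambda>t. - pd1 G (fst (\<Phi> (Zt t))) (fst (\<Phi> (Zt' t))))"
    using id1 by auto
  have e2: "(\<lambda>t. snd (\<Phi> (Zt' t))) = (\<lambda>t. pd2 G (fst (\<Phi> (Zt t))) (fst (\<Phi> (Zt' t))))"
    using id2 by auto
  show "snd (D\<Phi> Z \<xi>) = - (pd1 (pd1 G) (fst (\<Phi> Z)) (fst (\<Phi> Z')) * fst (D\<Phi> Z \<xi>)
                              + pd2 (pd1 G) (fst (\<Phi> Z)) (fst (\<Phi> Z')) * fst (D\<Phi> Z' \<xi>'))"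
    using DERIV_unique[OF sY g1[folded e1]] .
  show "snd (D\<Phi> Z' \<xi>') = pd1 (pd2 G) (fst (\<Phi> Z)) (fst (\<Phi> Z')) * fst (D\<Phi> Z \<xi>)
                              + pd2 (pd2 G) (fst (\<Phi> Z)) (fst (\<Phi> Z')) * fst (D\<Phi> Z' \<xi>')"
    using DERIV_unique[OF sY' g2[folded e2]] .
qed


lemma orbit_z:
  assumes "orbit T z"
  shows "z n = (fst (z n), - pd1 H (fst (z n)) (fst (z (n+1))))"
    and "z (n+1) = (fst (z (n+1)), pd2 H (fst (z n)) (fst (z (n+1))))"
proof -
  obtain q p where zn: "z n = (q, p)" by (cases "z n")
  obtain q' p' where zn1: "z (n+1) = (q', p')" by (cases "z (n+1)")
  have "T (q, p) = (q', p')" using assms zn zn1 unfolding orbit_def by metis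
  then have "p = - pd1 H q q' \<and> p' = pd2 H q q'" using T_gen_H by blast
  then show "z n = (fst (z n), - pd1 H (fst (z n)) (fst (z (n+1))))"
    and "z (n+1) = (fst (z (n+1)), pd2 H (fst (z n)) (fst (z (n+1))))" using zn zn1 by auto
qed

lemma orbit_G:
  assumes "orbit T z"
  shows "snd (\<Phi> (z n)) = - pd1 G (fst (\<Phi> (z n))) (fst (\<Phi> (z (n+1))))"
    and "snd (\<Phi> (z (n+1))) = pd2 G (fst (\<Phi> (z n))) (fst (\<Phi> (z (n+1))))"
proof -
  have "T (z n) = z (n+1)" using assms unfolding orbit_def by metis
  then show "snd (\<Phi> (z n)) = - pd1 G (fst (\<Phi> (z n))) (fst (\<Phi> (z (n+1))))"
    and "snd (\<Phi> (z (n+1))) = pd2 G (fst (\<Phi> (z n))) (fst (\<Phi> (z (n+1))))"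
    using T_gen_G by blast+
qed

lemma config_H: "orbit T z \<Longrightarrow> config H (\<lambda>k. fst (z k))"
  unfolding config_def
proof
  fix n assume o: "orbit T z"
  have "snd (z n) = - pd1 H (fst (z n)) (fst (z (n+1)))" using orbit_z(1)[OF o, of n] by (metis snd_conv)
  moreover have "snd (z (n-1+1)) = pd2 H (fst (z (n-1))) (fst (z (n-1+1)))" using orbit_z(2)[OF o, of "n-1"] by (metis snd_conv)
  ultimately show "pd2 H (fst (z (n - 1))) (fst (z n)) + pd1 H (fst (z n)) (fst (z (n + 1))) = 0" by simp
qed

lemma config_G: "orbit T z \<Longrightarrow> config G (\<lambda>k. fst (\<Phi> (z k)))"
  unfolding config_def
proof
  fix n assume o: "orbit T z"
  have "snd (\<Phi> (z n)) = - pd1 G (fst (\<Phi> (z n))) (fst (\<Phi> (z (n+1))))" using orbit_G(1)[OF o, of n] .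
  moreover have "snd (\<Phi> (z (n-1+1))) = pd2 G (fst (\<Phi> (z (n-1)))) (fst (\<Phi> (z (n-1+1))))" using orbit_G(2)[OF o, of "n-1"] .
  ultimately show "pd2 G (fst (\<Phi> (z (n - 1)))) (fst (\<Phi> (z n))) + pd1 G (fst (\<Phi> (z n))) (fst (\<Phi> (z (n + 1)))) = 0"
    by simp
qed

lemma transfer_seq:
  assumes o: "orbit T z" and u: "jac H (\<lambda>k. fst (z k)) j u" and n: "n \<ge> j"
  defines "pu \<equiv> \<lambda>k. - A1 H (\<lambda>k. fst (z k)) k * u k - BB H (\<lambda>k. fst (z k)) k * u (k+1)"
  shows "snd (D\<Phi> (z n) (u n, pu n)) = - (A1 G (\<lambda>k. fst (\<Phi> (z k))) n * fst (D\<Phi> (z n) (u n, pu n))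
            + BB G (\<lambda>k. fst (\<Phi> (z k))) n * fst (D\<Phi> (z (n+1)) (u (n+1), pu (n+1))))"
    and "snd (D\<Phi> (z (n+1)) (u (n+1), pu (n+1))) = BB G (\<lambda>k. fst (\<Phi> (z k))) n * fst (D\<Phi> (z n) (u n, pu n))
            + A2 G (\<lambda>k. fst (\<Phi> (z k))) n * fst (D\<Phi> (z (n+1)) (u (n+1), pu (n+1)))"
proof -
  define a where "a = fst (z n)"
  define b where "b = fst (z (n+1))"
  have Z: "z n = (a, - pd1 H a b)" using orbit_z(1)[OF o, of n] by (simp add: a_def b_def)
  have Z': "z (n+1) = (b, pd2 H a b)" using orbit_z(2)[OF o, of n] by (simp add: a_def b_def)
  have xi: "(u n, pu n) = (u n, - pd1 (pd1 H) a b * u n - pd2 (pd1 H) a b * u (n+1))"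
    by (simp add: pu_def A1_def BB_def a_def b_def)
  have jn: "BB H (\<lambda>k. fst (z k)) (n+1-1) * u (n+1-1) + (A2 H (\<lambda>k. fst (z k)) (n+1-1) + A1 H (\<lambda>k. fst (z k)) (n+1)) * u (n+1)
      + BB H (\<lambda>k. fst (z k)) (n+1) * u (n+1+1) = 0"
    using u[unfolded jac_def, rule_format, of "n+1"] n by simp
  have xi': "(u (n+1), pu (n+1)) = (u (n+1), pd1 (pd2 H) a b * u n + pd2 (pd2 H) a b * u (n+1))"
    using jn by (simp add: pu_def A1_def BB_def A2_def a_def b_def clairaut[OF H_C2] algebra_simps)
  note tr = transfer[where a=a and b=b and ua="u n" and ub="u (n+1)", folded Z Z' xi xi']
  show "snd (D\<Phi> (z n) (u n, pu n)) = - (A1 G (\<lambda>k. fst (\<Phi> (z k))) n * fst (D\<Phi> (z n) (u n, pu n))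
            + BB G (\<lambda>k. fst (\<Phi> (z k))) n * fst (D\<Phi> (z (n+1)) (u (n+1), pu (n+1))))"
    using tr(1) by (simp add: A1_def BB_def)
  show "snd (D\<Phi> (z (n+1)) (u (n+1), pu (n+1))) = BB G (\<lambda>k. fst (\<Phi> (z k))) n * fst (D\<Phi> (z n) (u n, pu n))
            + A2 G (\<lambda>k. fst (\<Phi> (z k))) n * fst (D\<Phi> (z (n+1)) (u (n+1), pu (n+1)))"
    using tr(2) by (simp add: A2_def BB_def clairaut[OF G_C2])
qed


lemma jac_transfer:
  assumes o: "orbit T z" and u: "jac H (\<lambda>k. fst (z k)) j u"
  shows "jac G (\<lambda>k. fst (\<Phi> (z k))) j
     (\<lambda>k. fst (D\<Phi> (z k) (u k, - A1 H (\<lambda>k. fst (z k)) k * u k - BB H (\<lambda>k. fst (z k)) k * u (k+1))))"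
  unfolding jac_def
proof (intro allI impI)
  fix k assume k: "k > j"
  note t2 = transfer_seq(2)[OF o u, of "k-1"]
  note t1 = transfer_seq(1)[OF o u, of k]
  from t1 t2 k show "BB G (\<lambda>k. fst (\<Phi> (z k))) (k - 1) * fst (D\<Phi> (z (k - 1)) (u (k - 1),
        - A1 H (\<lambda>k. fst (z k)) (k - 1) * u (k - 1) - BB H (\<lambda>k. fst (z k)) (k - 1) * u (k - 1 + 1))) +
    (A2 G (\<lambda>k. fst (\<Phi> (z k))) (k - 1) + A1 G (\<lambda>k. fst (\<Phi> (z k))) k) *
      fst (D\<Phi> (z k) (u k, - A1 H (\<lambda>k. fst (z k)) k * u k - BB H (\<lambda>k. fst (z k)) k * u (k + 1))) +
    BB G (\<lambda>k. fst (\<Phi> (z k))) k * fst (D\<Phi> (z (k + 1)) (u (k + 1),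
        - A1 H (\<lambda>k. fst (z k)) (k + 1) * u (k + 1) - BB H (\<lambda>k. fst (z k)) (k + 1) * u (k + 1 + 1))) = 0"
    by (simp add: algebra_simps)
qed


lemma lin_D: "D\<Phi> z (a, b) = (a * fst (D\<Phi> z (1,0)) + b * fst (D\<Phi> z (0,1)), a * snd (D\<Phi> z (1,0)) + b * snd (D\<Phi> z (0,1)))"
  using lin2 Phi_deriv has_derivative_linear by blast

lemma fwd:
  assumes o: "orbit T z" and mH: "m_config H (\<lambda>k. fst (z k))"
    and geomH: "\<And>n v. D\<Phi> (z n) v = (0, 1) \<Longrightarrow>
           v \<in> N_cone H (fst (z (n - 1))) (fst (z n)) (fst (z (n + 1)))"
  shows "m_config G (\<lambda>k. fst (\<Phi> (z k)))"
proof -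
  let ?q = "\<lambda>k. fst (z k)"
  let ?x = "\<lambda>k. fst (\<Phi> (z k))"
  have PH: "posprop H ?q" by (rule m_config_posprop[OF H_C2 H_twist mH])
  have posH: "\<And>n. BB H ?q n > 0" using H_twist by (simp add: BB_def)
  have nzH: "\<And>n. BB H ?q n \<noteq> 0" using posH by (metis less_irrefl)
  have posG: "\<And>n. BB G ?x n > 0" using G_twist by (simp add: BB_def)
  have nzG: "\<And>n. BB G ?x n \<noteq> 0" using posG by (metis less_irrefl)
  define \<alpha> where "\<alpha> k = fst (D\<Phi> (z k) (1,0))" for k
  define \<gamma> where "\<gamma> k = snd (D\<Phi> (z k) (1,0))" for k
  define \<beta> where "\<beta> k = fst (D\<Phi> (z k) (0,1))" for k
  define \<delta> where "\<delta> k = snd (D\<Phi> (z k) (0,1))" for k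
  have lin: "D\<Phi> (z k) (a, b) = (a * \<alpha> k + b * \<beta> k, a * \<gamma> k + b * \<delta> k)" for k a b
    unfolding \<alpha>_def \<beta>_def \<gamma>_def \<delta>_def by (rule lin_D)
  have det: "\<alpha> k * \<delta> k - \<beta> k * \<gamma> k = 1" for k
    unfolding \<alpha>_def \<beta>_def \<gamma>_def \<delta>_def by (rule Phi_sympl)
  have cone: "\<alpha> k > A1 H ?q k * \<beta> k \<and> \<alpha> k > A2 H ?q (k-1) * (- \<beta> k)" for k
  proof -
    have "D\<Phi> (z k) (- \<beta> k, \<alpha> k) = (0, 1)" unfolding lin using det[of k] by (simp add: algebra_simps)
    from geomH[OF this] show ?thesis by (simp add: N_cone_def A1_def A2_def)
  qed
  have posG_prop: "posprop G ?x"
    unfolding posprop_def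
  proof (intro allI impI)
    fix j v n assume v: "jac G ?x j v" and v0: "v j = 0" and v1: "v (j+1) > 0" and nj: "n > j"
    obtain u where u: "jac H ?q (j-1) u" "u (j-1) = (- \<alpha> j - A2 H ?q (j-1) * \<beta> j) / BB H ?q (j-1)"
        "u (j-1+1) = \<beta> j"
      using jac_exists[OF nzH] by blast
    have uj: "u j = \<beta> j" using u(3) by simp
    have jj: "BB H ?q (j-1) * u (j-1) + (A2 H ?q (j-1) + A1 H ?q j) * u j + BB H ?q j * u (j+1) = 0"
      using u(1)[unfolded jac_def, rule_format, of j] by simp
    have bm: "BB H ?q (j-1) * u (j-1) = - \<alpha> j - A2 H ?q (j-1) * \<beta> j" using u(2) nzH[of "j-1"] by simp
    have uj1: "BB H ?q j * u (j+1) = \<alpha> j - A1 H ?q j * \<beta> j"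
      using jj bm uj by (simp add: algebra_simps)
    have up: "u (j+1) > 0"
    proof -
      have "BB H ?q j * u (j+1) > 0" using uj1 cone[of j] by simp
      then show ?thesis using posH[of j] by (simp add: zero_less_mult_iff)
    qed
    have um: "u (j-1) < 0"
    proof -
      have "BB H ?q (j-1) * u (j-1) < 0" using bm cone[of j] by (simp add: algebra_simps)
      then show ?thesis using posH[of "j-1"] by (simp add: mult_less_0_iff)
    qed
    have upos: "u k > 0" if "k \<ge> j+1" for k by (rule sep[OF posH PH u(1) um up that])
    define pu where "pu k = - A1 H ?q k * u k - BB H ?q k * u (k+1)" for k
    define v' where "v' k = fst (D\<Phi> (z k) (u k, pu k))" for k
    have jv': "jac G ?x (j-1) v'" unfolding v'_def pu_def by (rule jac_transfer[OF o u(1)])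
    have puj: "pu j = - \<alpha> j" unfolding pu_def using uj1 uj by (simp add: algebra_simps)
    have Dj: "D\<Phi> (z j) (u j, pu j) = (0, -1)" unfolding uj puj lin using det[of j] by (simp add: algebra_simps)
    have v'0: "v' j = 0" unfolding v'_def Dj by simp
    have "snd (D\<Phi> (z j) (u j, pu j)) = - (A1 G ?x j * v' j + BB G ?x j * v' (j+1))"
      using transfer_seq(1)[OF o u(1), of j] unfolding v'_def pu_def by simp
    then have "BB G ?x j * v' (j+1) = 1" unfolding Dj v'0 by simp
    then have "v' (j+1) = 1 / BB G ?x j" using nzG[of j] by (simp add: field_simps)
    then have v'1: "v' (j+1) > 0" using posG[of j] by simp
    have v'pos: "v' k > 0" if k: "k \<ge> j+2" for k
    proof -
      have jk: "BB H ?q (k-1) * u (k-1) + (A2 H ?q (k-1) + A1 H ?q k) * u k + BB H ?q k * u (k+1) = 0"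
        using u(1)[unfolded jac_def, rule_format, of k] k by simp
      have "u k * \<alpha> k - pu k * (- \<beta> k) > 0"
      proof (rule key_alg)
        show "u (k-1) > 0" "u k > 0" "u (k+1) > 0" using upos k by auto
        show "BB H ?q k > 0" "BB H ?q (k-1) > 0" by (rule posH)+
        show "\<alpha> k > - A1 H ?q k * (- \<beta> k)" using cone[of k] by simp
        show "\<alpha> k > A2 H ?q (k-1) * (- \<beta> k)" using cone[of k] by simp
        show "pu k = - A1 H ?q k * u k - BB H ?q k * u (k+1)" by (simp add: pu_def)
        show "pu k = BB H ?q (k-1) * u (k-1) + A2 H ?q (k-1) * u k"
          using jk by (simp add: pu_def algebra_simps)
      qed
      then show ?thesis unfolding v'_def lin by (simp add: algebra_simps)
    qed
    define c where "c = v (j+1) / v' (j+1)"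
    have c: "c > 0" using v1 v'1 by (simp add: c_def)
    have eqv: "v k = c * v' k" if "k \<ge> j" for k
    proof (rule jac_unique[OF nzG v])
      show "jac G ?x j (\<lambda>n. c * v' n)" using jac_scale[OF jac_mono[OF jv']] by simp
      show "v j = c * v' j" using v0 v'0 by simp
      show "v (j+1) = c * v' (j+1)" using v'1 by (simp add: c_def)
    qed (rule that)
    show "v n > 0"
    proof (cases "n = j+1")
      case True then show ?thesis using v1 by simp
    next
      case False
      then have "n \<ge> j+2" using nj by simp
      then show ?thesis using eqv[of n] v'pos[of n] c nj by simp
    qed
  qed
  show ?thesis by (rule posprop_m_config[OF G_C2 G_twist config_G[OF o] posG_prop])
qed


lemma bwd:
  assumes o: "orbit T z" and mG: "m_config G (\<lambda>k. fst (\<Phi> (z k)))"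
    and geomG: "\<And>n. D\<Phi> (z n) (0, 1) \<in>
             N_cone G (fst (\<Phi> (z (n - 1)))) (fst (\<Phi> (z n))) (fst (\<Phi> (z (n + 1))))"
  shows "m_config H (\<lambda>k. fst (z k))"
proof -
  let ?q = "\<lambda>k. fst (z k)"
  let ?x = "\<lambda>k. fst (\<Phi> (z k))"
  have PG: "posprop G ?x" by (rule m_config_posprop[OF G_C2 G_twist mG])
  have posH: "\<And>n. BB H ?q n > 0" using H_twist by (simp add: BB_def)
  have nzH: "\<And>n. BB H ?q n \<noteq> 0" using posH by (metis less_irrefl)
  have posG: "\<And>n. BB G ?x n > 0" using G_twist by (simp add: BB_def)
  have nzG: "\<And>n. BB G ?x n \<noteq> 0" using posG by (metis less_irrefl)
  define \<alpha> where "\<alpha> k = fst (D\<Phi> (z k) (1,0))" for k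
  define \<gamma> where "\<gamma> k = snd (D\<Phi> (z k) (1,0))" for k
  define \<beta> where "\<beta> k = fst (D\<Phi> (z k) (0,1))" for k
  define \<delta> where "\<delta> k = snd (D\<Phi> (z k) (0,1))" for k
  have lin: "D\<Phi> (z k) (a, b) = (a * \<alpha> k + b * \<beta> k, a * \<gamma> k + b * \<delta> k)" for k a b
    unfolding \<alpha>_def \<beta>_def \<gamma>_def \<delta>_def by (rule lin_D)
  have det: "\<alpha> k * \<delta> k - \<beta> k * \<gamma> k = 1" for k
    unfolding \<alpha>_def \<beta>_def \<gamma>_def \<delta>_def by (rule Phi_sympl)
  have cone: "\<delta> k > - A1 G ?x k * \<beta> k \<and> \<delta> k > A2 G ?x (k-1) * \<beta> k" for k
  proof -
    have "D\<Phi> (z k) (0, 1) = (\<beta> k, \<delta> k)" by (simp add: \<beta>_def \<delta>_def)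
    with geomG[of k] show ?thesis by (simp add: N_cone_def A1_def A2_def)
  qed
  have posH_prop: "posprop H ?q"
    unfolding posprop_def
  proof (intro allI impI)
    fix j f n assume f: "jac H ?q j f" and f0: "f j = 0" and f1: "f (j+1) > 0" and nj: "n > j"
    obtain f' where f': "jac H ?q (j-1) f'" "f' (j-1) = - BB H ?q j * f (j+1) / BB H ?q (j-1)"
        "f' (j-1+1) = 0"
      using jac_exists[OF nzH] by blast
    have f'j: "f' j = 0" using f'(3) by simp
    have jj: "BB H ?q (j-1) * f' (j-1) + (A2 H ?q (j-1) + A1 H ?q j) * f' j + BB H ?q j * f' (j+1) = 0"
      using f'(1)[unfolded jac_def, rule_format, of j] by simp
    have "BB H ?q (j-1) * f' (j-1) = - BB H ?q j * f (j+1)" using f'(2) nzH[of "j-1"] by simp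
    then have "BB H ?q j * f' (j+1) = BB H ?q j * f (j+1)" using jj f'j by simp
    then have f'j1: "f' (j+1) = f (j+1)" using nzH[of j] by simp
    have eqf: "f k = f' k" if "k \<ge> j" for k
      by (rule jac_unique[OF nzH f jac_mono[OF f'(1)] _ _ that]) (use f0 f'j f'j1 in auto)
    define pf where "pf k = - A1 H ?q k * f' k - BB H ?q k * f' (k+1)" for k
    define v where "v k = fst (D\<Phi> (z k) (f' k, pf k))" for k
    define pv where "pv k = snd (D\<Phi> (z k) (f' k, pf k))" for k
    have jv: "jac G ?x (j-1) v" unfolding v_def pf_def by (rule jac_transfer[OF o f'(1)])
    have ts1: "pv k = - (A1 G ?x k * v k + BB G ?x k * v (k+1))" if "k \<ge> j-1" for k
      using transfer_seq(1)[OF o f'(1) that] unfolding v_def pv_def pf_def by simp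
    have ts2: "pv k = BB G ?x (k-1) * v (k-1) + A2 G ?x (k-1) * v k" if "k \<ge> j" for k
      using transfer_seq(2)[OF o f'(1), of "k-1"] that unfolding v_def pv_def pf_def by simp
    have pfj: "pf j = - BB H ?q j * f (j+1)" by (simp add: pf_def f'j f'j1)
    have pfneg: "pf j < 0" using pfj posH[of j] f1 by simp
    have vj: "v j = pf j * \<beta> j" and pvj: "pv j = pf j * \<delta> j"
      unfolding v_def pv_def f'j lin by simp_all
    have vp: "v (j+1) > 0"
    proof -
      have "BB G ?x j * v (j+1) = - pf j * (\<delta> j + A1 G ?x j * \<beta> j)"
        using ts1[of j] vj pvj by (simp add: algebra_simps)
      moreover have "- pf j * (\<delta> j + A1 G ?x j * \<beta> j) > 0" using pfneg cone[of j] by (intro mult_pos_pos) auto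
      ultimately have "BB G ?x j * v (j+1) > 0" by linarith
      then show ?thesis using posG[of j] by (simp add: zero_less_mult_iff)
    qed
    have vm: "v (j-1) < 0"
    proof -
      have "BB G ?x (j-1) * v (j-1) = pf j * (\<delta> j - A2 G ?x (j-1) * \<beta> j)"
        using ts2[of j] vj pvj by (simp add: algebra_simps)
      moreover have "pf j * (\<delta> j - A2 G ?x (j-1) * \<beta> j) < 0" using pfneg cone[of j] by (simp add: mult_neg_pos)
      ultimately have "BB G ?x (j-1) * v (j-1) < 0" by linarith
      then show ?thesis using posG[of "j-1"] by (simp add: mult_less_0_iff)
    qed
    have vpos: "v k > 0" if "k \<ge> j+1" for k by (rule sep[OF posG PG jv vm vp that])
    show "f n > 0"
    proof (cases "n = j+1")
      case True then show ?thesis using f1 by simp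
    next
      case False
      then have k: "n \<ge> j+2" using nj by simp
      have "v n * \<delta> n - pv n * \<beta> n > 0"
      proof (rule key_alg)
        show "v (n-1) > 0" "v n > 0" "v (n+1) > 0" using vpos k by auto
        show "BB G ?x n > 0" "BB G ?x (n-1) > 0" by (rule posG)+
        show "\<delta> n > - A1 G ?x n * \<beta> n" using cone[of n] by simp
        show "\<delta> n > A2 G ?x (n-1) * \<beta> n" using cone[of n] by simp
        show "pv n = - A1 G ?x n * v n - BB G ?x n * v (n+1)" using ts1[of n] k by simp
        show "pv n = BB G ?x (n-1) * v (n-1) + A2 G ?x (n-1) * v n" using ts2[of n] k by simp
      qed
      moreover have "v n * \<delta> n - pv n * \<beta> n = f' n * (\<alpha> n * \<delta> n - \<beta> n * \<gamma> n)"
        unfolding v_def pv_def lin by (simp add: algebra_simps)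
      ultimately have "f' n > 0" using det[of n] by simp
      then show ?thesis using eqf[of n] nj by simp
    qed
  qed
  show ?thesis by (rule posprop_m_config[OF H_C2 H_twist config_H[OF o] posH_prop])
qed

end

theorem theorem1p2:
  fixes T :: "real \<times> real \<Rightarrow> real \<times> real"
    and \<Phi> :: "real \<times> real \<Rightarrow> real \<times> real"
    and D\<Phi> :: "real \<times> real \<Rightarrow> real \<times> real \<Rightarrow> real \<times> real"
    and H G :: "real \<Rightarrow> real \<Rightarrow> real"
    and d :: real
  assumes Phi_bij: "bij \<Phi>"
    and Phi_deck: "d = 1 \<or> d = -1" "\<And>q p. \<Phi> (q + 1, p) = \<Phi> (q, p) + (d, 0)"
    and Phi_deriv: "\<And>z. (\<Phi> has_derivative D\<Phi> z) (at z)"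
    and Phi_C1: "\<And>v. continuous_on UNIV (\<lambda>z. D\<Phi> z v)"
    and Phi_sympl: "\<And>z. fst (D\<Phi> z (1, 0)) * snd (D\<Phi> z (0, 1))
                        - fst (D\<Phi> z (0, 1)) * snd (D\<Phi> z (1, 0)) = 1"
    and H_C2: "C2_fun2 H" and G_C2: "C2_fun2 G"
    and H_per: "\<And>q q'. H (q + 1) (q' + 1) = H q q'"
    and G_per: "\<And>x x'. G (x + 1) (x' + 1) = G x x'"
    and H_twist: "\<And>q q'. pd2 (pd1 H) q q' > 0"
    and G_twist: "\<And>x x'. pd2 (pd1 G) x x' > 0"
    and T_gen_H: "\<And>q p q' p'. T (q, p) = (q', p') \<longleftrightarrow> p = - pd1 H q q' \<and> p' = pd2 H q q'"
    and T_gen_G: "\<And>z z'. T z = z' \<longleftrightarrow>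
           snd (\<Phi> z) = - pd1 G (fst (\<Phi> z)) (fst (\<Phi> z')) \<and>
           snd (\<Phi> z') = pd2 G (fst (\<Phi> z)) (fst (\<Phi> z'))"
    and geom_H: "\<And>z n v. orbit T z \<Longrightarrow> m_config H (\<lambda>k. fst (z k)) \<Longrightarrow>
           D\<Phi> (z n) v = (0, 1) \<Longrightarrow>
           v \<in> N_cone H (fst (z (n - 1))) (fst (z n)) (fst (z (n + 1)))"
    and geom_G: "\<And>z n. orbit T z \<Longrightarrow> m_config G (\<lambda>k. fst (\<Phi> (z k))) \<Longrightarrow>
           D\<Phi> (z n) (0, 1) \<in>
             N_cone G (fst (\<Phi> (z (n - 1)))) (fst (\<Phi> (z n))) (fst (\<Phi> (z (n + 1))))"
  shows "msweep T fst H = msweep T (\<lambda>z. fst (\<Phi> z)) G"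
proof -
  interpret twoc T \<Phi> D\<Phi> H G
    by unfold_locales (rule Phi_deriv Phi_sympl H_C2 G_C2 H_twist G_twist T_gen_H T_gen_G)+
  have F: "m_config G (\<lambda>k. fst (\<Phi> (z k)))" if "orbit T z" "m_config H (\<lambda>k. fst (z k))" for z
    using fwd[OF that geom_H[OF that]] .
  have B: "m_config H (\<lambda>k. fst (z k))" if "orbit T z" "m_config G (\<lambda>k. fst (\<Phi> (z k)))" for z
    using bwd[OF that geom_G[OF that]] .
  show ?thesis unfolding msweep_def using F B by blast
qed

end
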